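(* For every $y_0\in Y$, $$\limsup_{T\to\infty}\Gamma_T(y_0)\subset W_2(y_0)\qquad\text{and}\qquad \limsup_{\alpha\uparrow 1}\Theta_\alpha(y_0)\subset W_2(y_0).$$ In particular, $W_2(y_0)$ is nonempty.
   Context: Let $Y\subset\mathbb{R}^m$ be a nonempty compact set and $U_0$ a compact metric space. Let $U(\cdot):Y\rightsquigarrow U_0$ be an upper semicontinuous compact-valued set-valued map, and let $f:\mathbb{R}^m\times U_0\to\mathbb{R}^m$ be continuous. For $y\in Y$ put $A(y):=\{u\in U(y): f(y,u)\in Y\}$ and let $G:=\{(y,u): y\in Y,\ u\in A(y)\}$, which is a compact subset of $Y\times U_0$. Standing assumption: $A(y)\neq\emptyset$ for every $y\in Y$. For $y_0\in Y$, an admissible process on $\{0,\dots,T-1\}$ (respectively on $\{0,1,2,\dots\}$) is a pair of sequences $(y(t),u(t))$ with $y(0)=y_0$, $u(t)\in A(y(t))$ and $y(t+1)=f(y(t),u(t))$ for all $t$ in that range. The corresponding controls form the set $\mathcal U_T(y_0)$ (respectively $\mathcal U(y_0)$). Occupational measures: - For an admissible process on $\{0,\dots,T-1\}$, the occupational measure is the Borel probability measure on $G$ given by $\gamma(Q)=\frac1T\sum_{t=0}^{T-1}1_Q(y(t),u(t))$. - For an admissible process on $\{0,1,\dots\}$ and $\alpha\in(0,1)$, the discounted occupational measure is $\gamma^\alpha(Q)=(1-\alpha)\sum_{t=0}^\infty\alpha^t 1_Q(y(t),u(t))$. - $\Gamma_T(y_0)$ is the set of occupational measures generated by controls in $\mathcal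 U_T(y_0)$. - $\Theta_\alpha(y_0)$ is the set of discounted occupational measures generated by controls in $\mathcal U(y_0)$. Measure spaces and the set $W$: - $\mathcal P(G)$ is the set of Borel probability measures on $G$, equipped with the weak$^*$ topology (convergence of integrals of all continuous functions on $G$). - $\mathcal M_+(G)$ is the set of finite nonnegative Borel measures on $G$. - $W:=\{\gamma\in\mathcal P(G): \int_G(\varphi(f(y,u))-\varphi(y))\,\gamma(dy,du)=0\ \text{for all }\varphi\in C(Y)\}$. - $W_2(y_0)$ is the set of $\gamma\in W$ for which there exists a sequence $\xi_i\in\mathcal M_+(G)$, $i=1,2,\dots$, such that for all $\varphi\in C(Y)$: $$\int_G(\varphi(y)-\varphi(y_0))\,\gamma(dy,du)=\lim_{i\to\infty}\int_G(\varphi(f(y,u))-\varphi(y))\,\xi_i(dy,du).$$ Upper limits: - $\limsup_{T\to\infty}\Gamma_T(y_0)$ is the set of $\gamma\in\mathcal P(G)$ for which there exist integers $T_i\to\infty$ and $\gamma_i\in\Gamma_{T_i}(y_0)$ with $\gamma_i\to\gamma$ weakly$^*$. - $\limsup_{\alpha\uparrow1}\Theta_\alpha(y_0)$ is defined analogously with $\alpha_i\uparrow1$ and $\gamma_i\in\Theta_{\alpha_i}(y_0)$. *)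

theory Defs
  imports "HOL-Probability.Probability"
begin

definition usc_on :: "'a::metric_space set \<Rightarrow> ('a \<Rightarrow> 'b::topological_space set) \<Rightarrow> bool" where
  "usc_on Y U \<longleftrightarrow> (\<forall>y\<in>Y. \<forall>V. open V \<and> U y \<subseteq> V \<longrightarrow>
      (\<exists>e>0. \<forall>y'\<in>Y. dist y' y < e \<longrightarrow> U y' \<subseteq> V))"

definition Aset :: "'a set \<Rightarrow> ('a \<Rightarrow> 'b set) \<Rightarrow> ('a \<Rightarrow> 'b \<Rightarrow> 'a) \<Rightarrow> 'a \<Rightarrow> 'b set" where
  "Aset Y U f y = {u \<in> U y. f y u \<in> Y}"

definition Gset :: "'a set \<Rightarrow> ('a \<Rightarrow> 'b set) \<Rightarrow> ('a \<Rightarrow> 'b \<Rightarrow> 'a) \<Rightarrow> ('a \<times> 'b) set" where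
  "Gset Y U f = {(y, u). y \<in> Y \<and> u \<in> Aset Y U f y}"

definition prob_on :: "('c::topological_space) set \<Rightarrow> 'c measure set" where
  "prob_on G = {M. sets M = sets (restrict_space borel G) \<and> prob_space M}"

definition fin_on :: "('c::topological_space) set \<Rightarrow> 'c measure set" where
  "fin_on G = {M. sets M = sets (restrict_space borel G) \<and> finite_measure M}"

definition weak_conv :: "('c::topological_space) set \<Rightarrow> (nat \<Rightarrow> 'c measure) \<Rightarrow> 'c measure \<Rightarrow> bool" where
  "weak_conv G gs g \<longleftrightarrow> (\<forall>\<phi>::'c \<Rightarrow> real. continuous_on G \<phi> \<longrightarrow>
      (\<lambda>i. integral\<^sup>L (gs i) \<phi>) \<longlonglongrightarrow> integral\<^sup>L g \<phi>)"

definition admissible_fin where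
  "admissible_fin Y U f T y0 (y :: nat \<Rightarrow> 'a) (u :: nat \<Rightarrow> 'b) \<longleftrightarrow> y 0 = y0 \<and>
     (\<forall>t<T. y t \<in> Y \<and> u t \<in> Aset Y U f (y t) \<and> y (Suc t) = f (y t) (u t))"

definition admissible_inf where
  "admissible_inf Y U f y0 (y :: nat \<Rightarrow> 'a) (u :: nat \<Rightarrow> 'b) \<longleftrightarrow> y 0 = y0 \<and>
     (\<forall>t. y t \<in> Y \<and> u t \<in> Aset Y U f (y t) \<and> y (Suc t) = f (y t) (u t))"

definition Gamma :: "'a::topological_space set \<Rightarrow> ('a \<Rightarrow> 'b::topological_space set) \<Rightarrow> ('a \<Rightarrow> 'b \<Rightarrow> 'a)
    \<Rightarrow> nat \<Rightarrow> 'a \<Rightarrow> ('a \<times> 'b) measure set" where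
  "Gamma Y U f T y0 = {\<gamma> \<in> prob_on (Gset Y U f). \<exists>y u. admissible_fin Y U f T y0 y u \<and>
     (\<forall>Q \<in> sets \<gamma>. emeasure \<gamma> Q = ennreal ((\<Sum>t<T. indicator Q (y t, u t)) / real T))}"

definition Theta :: "'a::topological_space set \<Rightarrow> ('a \<Rightarrow> 'b::topological_space set) \<Rightarrow> ('a \<Rightarrow> 'b \<Rightarrow> 'a)
    \<Rightarrow> real \<Rightarrow> 'a \<Rightarrow> ('a \<times> 'b) measure set" where
  "Theta Y U f \<alpha> y0 = {\<gamma> \<in> prob_on (Gset Y U f). \<exists>y u. admissible_inf Y U f y0 y u \<and>
     (\<forall>Q \<in> sets \<gamma>. emeasure \<gamma> Q = ennreal ((1 - \<alpha>) * (\<Sum>t. \<alpha> ^ t * indicator Q (y t, u t))))}"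

definition Wset :: "'a::topological_space set \<Rightarrow> ('a \<Rightarrow> 'b::topological_space set) \<Rightarrow> ('a \<Rightarrow> 'b \<Rightarrow> 'a)
    \<Rightarrow> ('a \<times> 'b) measure set" where
  "Wset Y U f = {\<gamma> \<in> prob_on (Gset Y U f). \<forall>\<phi>::'a \<Rightarrow> real. continuous_on Y \<phi> \<longrightarrow>
      integral\<^sup>L \<gamma> (\<lambda>(y, u). \<phi> (f y u) - \<phi> y) = 0}"

definition W2set :: "'a::topological_space set \<Rightarrow> ('a \<Rightarrow> 'b::topological_space set) \<Rightarrow> ('a \<Rightarrow> 'b \<Rightarrow> 'a)
    \<Rightarrow> 'a \<Rightarrow> ('a \<times> 'b) measure set" where
  "W2set Y U f y0 = {\<gamma> \<in> Wset Y U f. \<exists>\<xi> :: nat \<Rightarrow> ('a \<times> 'b) measure.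
      (\<forall>i. \<xi> i \<in> fin_on (Gset Y U f)) \<and>
      (\<forall>\<phi>::'a \<Rightarrow> real. continuous_on Y \<phi> \<longrightarrow>
         (\<lambda>i. integral\<^sup>L (\<xi> i) (\<lambda>(y, u). \<phi> (f y u) - \<phi> y))
           \<longlonglongrightarrow> integral\<^sup>L \<gamma> (\<lambda>(y, u). \<phi> y - \<phi> y0))}"

definition limsup_Gamma where
  "limsup_Gamma Y U f y0 = {\<gamma> \<in> prob_on (Gset Y U f). \<exists>(T :: nat \<Rightarrow> nat) gs.
      filterlim T at_top sequentially \<and> (\<forall>i. gs i \<in> Gamma Y U f (T i) y0) \<and>
      weak_conv (Gset Y U f) gs \<gamma>}"

definition limsup_Theta where
  "limsup_Theta Y U f y0 = {\<gamma> \<in> prob_on (Gset Y U f). \<exists>(\<alpha> :: nat \<Rightarrow> real) gs.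
      (\<forall>i. 0 < \<alpha> i \<and> \<alpha> i < 1) \<and> \<alpha> \<longlonglongrightarrow> 1 \<and> (\<forall>i. gs i \<in> Theta Y U f (\<alpha> i) y0) \<and>
      weak_conv (Gset Y U f) gs \<gamma>}"

end

theory Submission
  imports Defs "HOL-Library.Nat_Bijection"
begin
definition dmeas :: "'c measure \<Rightarrow> (nat \<Rightarrow> real) \<Rightarrow> (nat \<Rightarrow> 'c) \<Rightarrow> 'c measure" where
  "dmeas M w p = distr (density (count_space UNIV) (\<lambda>n. ennreal (w n))) M p"

lemma dmeas_meas: "(\<And>n. p n \<in> space M) \<Longrightarrow> p \<in> measurable (count_space UNIV) M"
  by (simp add: measurable_count_space_eq1)

lemma sets_dmeas[simp]: "sets (dmeas M w p) = sets M"
  by (simp add: dmeas_def)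

lemma space_dmeas[simp]: "space (dmeas M w p) = space M"
  by (simp add: dmeas_def)

lemma emeasure_dmeas:
  assumes "\<And>n. p n \<in> space M" "A \<in> sets M"
  shows "emeasure (dmeas M w p) A = (\<Sum>n. ennreal (w n) * indicator A (p n))"
proof -
  have "emeasure (dmeas M w p) A = emeasure (density (count_space UNIV) (\<lambda>n. ennreal (w n))) (p -` A)"
    unfolding dmeas_def using assms dmeas_meas[of p M]
    by (subst emeasure_distr) auto
  also have "\<dots> = (\<integral>\<^sup>+n. ennreal (w n) * indicator (p -` A) n \<partial>count_space UNIV)"
    by (subst emeasure_density) auto
  also have "\<dots> = (\<Sum>n. ennreal (w n) * indicator A (p n))"
    by (subst nn_integral_count_space_nat) (simp add: indicator_def)
  finally show ?thesis .
qed

lemma dmeas_integral: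
  fixes g :: "'c \<Rightarrow> real"
  assumes p: "\<And>n. p n \<in> space M" and w: "\<And>n. 0 \<le> w n" "summable w"
    and g: "g \<in> borel_measurable M" and B: "\<And>x. x \<in> space M \<Longrightarrow> \<bar>g x\<bar> \<le> B"
  shows "integral\<^sup>L (dmeas M w p) g = (\<Sum>n. w n * g (p n))"
proof -
  have pm: "p \<in> measurable (count_space UNIV) M" using dmeas_meas p by blast
  have "integral\<^sup>L (dmeas M w p) g = integral\<^sup>L (density (count_space UNIV) (\<lambda>n. ennreal (w n))) (\<lambda>n. g (p n))"
    unfolding dmeas_def by (rule integral_distr) (use pm g in auto)
  also have "\<dots> = integral\<^sup>L (count_space UNIV) (\<lambda>n. w n *\<^sub>R g (p n))"
    using w by (subst integral_density) auto
  also have "\<dots> = (\<Sum>n. w n * g (p n))"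
  proof (subst integral_count_space_nat)
    have "summable (\<lambda>n. B * w n)" using w(2) by (rule summable_mult)
    moreover have "norm (norm (w n * g (p n))) \<le> B * w n" for n
      using B[OF p[of n]] w(1)[of n] by (simp add: abs_mult mult.commute) (metis mult.commute mult_right_mono)
    ultimately have "summable (\<lambda>n. norm (w n * g (p n)))"
      by (rule summable_comparison_test'[where N=0])
    then show "integrable (count_space UNIV) (\<lambda>n. w n *\<^sub>R g (p n))"
      by (simp add: integrable_count_space_nat_iff)
  qed simp
  finally show ?thesis .
qed

lemma dmeas_finite:
  assumes "\<And>n. 0 \<le> w n" "summable w" "\<And>n. p n \<in> space M"
  shows "finite_measure (dmeas M w p)"
proof -
  have "emeasure (density (count_space UNIV) (\<lambda>n. ennreal (w n))) UNIV = (\<Sum>n. ennreal (w n))"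
    by (subst emeasure_density) (auto simp: nn_integral_count_space_nat)
  also have "\<dots> = ennreal (\<Sum>n. w n)" using assms by (simp add: suminf_ennreal2)
  finally have "finite_measure (density (count_space UNIV) (\<lambda>n. ennreal (w n)))"
    by (intro finite_measureI) auto
  then show ?thesis unfolding dmeas_def by (rule finite_measure.finite_measure_distr) (use assms in \<open>simp add: measurable_count_space_eq1\<close>)
qed

definition cs :: "(nat \<Rightarrow> real) \<Rightarrow> real" where
  "cs a = (\<Sum>k. 2 * a k / 3 ^ Suc k)"

lemma summable_geo3: "summable (\<lambda>k. (2::real) / 3 ^ Suc k)"
proof -
  have "summable (\<lambda>k. (2/3::real) * (1/3) ^ k)"
    by (intro summable_mult summable_geometric) auto
  then show ?thesis by (simp add: power_divide field_simps)
qed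

lemma cs_summable:
  fixes a :: "nat \<Rightarrow> real"
  assumes "\<And>k. a k \<in> {0,1}"
  shows "summable (\<lambda>k. 2 * a k / 3 ^ Suc k)"
proof (rule summable_comparison_test'[OF summable_geo3, where N=0])
  fix n show "norm (2 * a n / 3 ^ Suc n) \<le> 2 / 3 ^ Suc n"
    using assms[of n] by auto
qed

lemma cs_bounds:
  assumes "\<And>k. a k \<in> {0,1}"
  shows "0 \<le> cs a \<and> cs a \<le> 1"
proof
  show "0 \<le> cs a" unfolding cs_def
  proof (rule suminf_nonneg[OF cs_summable[OF assms]])
    fix k show "0 \<le> 2 * a k / 3 ^ Suc k" using assms[of k] by auto
  qed
  have "(\<Sum>k. (2::real) / 3 ^ Suc k) = (\<Sum>k. (2/3) * (1/3) ^ k)"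
    by (simp add: power_divide field_simps)
  also have "\<dots> = (2/3) * (\<Sum>k. (1/3::real) ^ k)"
    by (intro suminf_mult summable_geometric) auto
  also have "\<dots> = 1" by (subst suminf_geometric) auto
  finally have s: "(\<Sum>k. (2::real) / 3 ^ Suc k) = 1" .
  show "cs a \<le> 1"
  proof -
    have "(\<Sum>k. 2 * a k / 3 ^ Suc k) \<le> (\<Sum>k. (2::real) / 3 ^ Suc k)"
    proof (rule suminf_le[OF _ cs_summable[OF assms] summable_geo3])
      fix k show "2 * a k / 3 ^ Suc k \<le> 2 / 3 ^ Suc k" using assms[of k]
        by (auto simp: divide_right_mono)
    qed
    then show ?thesis using s by (simp add: cs_def)
  qed
qed

lemma tail_geo3: "(\<Sum>j. (2::real) / 3 ^ Suc (j + Suc n)) = 1 / 3 ^ Suc n"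
proof -
  have "(\<Sum>j. (2::real) / 3 ^ Suc (j + Suc n)) = (\<Sum>j. (2 / 3 ^ Suc (Suc n)) * (1/3) ^ j)"
    by (intro suminf_cong) (simp add: power_add power_divide field_simps)
  also have "\<dots> = (2 / 3 ^ Suc (Suc n)) * (\<Sum>j. (1/3::real) ^ j)"
    by (intro suminf_mult summable_geometric) auto
  also have "\<dots> = 1 / 3 ^ Suc n" by (subst suminf_geometric) auto
  finally show ?thesis .
qed

lemma cs_sep:
  assumes a: "\<And>k. a k \<in> {0,1}" and b: "\<And>k. b k \<in> {0,1}"
    and eq: "\<And>k. k < n \<Longrightarrow> a k = b k" and ne: "a n \<noteq> b n"
  shows "1 / 3 ^ Suc n \<le> \<bar>cs a - cs b\<bar>"
proof -
  define d where "d k = 2 * (a k - b k) / 3 ^ Suc k" for k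
  have sd0: "summable (\<lambda>k. 2 * a k / 3 ^ Suc k - 2 * b k / 3 ^ Suc k)"
    by (rule summable_diff[OF cs_summable[OF a] cs_summable[OF b]])
  have dd: "d = (\<lambda>k. 2 * a k / 3 ^ Suc k - 2 * b k / 3 ^ Suc k)"
    by (auto simp: d_def fun_eq_iff diff_divide_distrib right_diff_distrib)
  have sd: "summable d" using sd0 dd by simp
  have diff: "cs a - cs b = suminf d" unfolding cs_def dd
    using suminf_diff[OF cs_summable[OF a] cs_summable[OF b]] by simp
  have split: "suminf d = (\<Sum>j. d (j + Suc n)) + sum d {..<Suc n}"
    by (rule suminf_split_initial_segment[OF sd])
  have "sum d {..<Suc n} = d n" using eq by (simp add: d_def)
  moreover have "\<bar>d n\<bar> = 2 / 3 ^ Suc n" using a[of n] b[of n] ne by (auto simp: d_def)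
  moreover have "\<bar>\<Sum>j. d (j + Suc n)\<bar> \<le> 1 / 3 ^ Suc n"
  proof -
    have s2: "summable (\<lambda>j. (2::real) / 3 ^ Suc (j + Suc n))"
      using summable_ignore_initial_segment[OF summable_geo3, of "Suc n"] by simp
    have bd: "norm (d (j + Suc n)) \<le> 2 / 3 ^ Suc (j + Suc n)" for j
      using a[of "j + Suc n"] b[of "j + Suc n"] by (auto simp: d_def)
    have sn: "summable (\<lambda>j. norm (d (j + Suc n)))"
      by (rule summable_comparison_test'[OF s2, where N=0]) (use bd in simp)
    have "norm (\<Sum>j. d (j + Suc n)) \<le> (\<Sum>j. norm (d (j + Suc n)))"
      by (rule summable_norm[OF sn])
    also have "\<dots> \<le> (\<Sum>j. 2 / 3 ^ Suc (j + Suc n))"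
      by (rule suminf_le[OF bd sn s2])
    finally have "\<bar>\<Sum>j. d (j + Suc n)\<bar> \<le> (\<Sum>j. 2 / 3 ^ Suc (j + Suc n))" by simp
    then show ?thesis using tail_geo3[of n] by simp
  qed
  ultimately show ?thesis using diff split by linarith
qed

lemma nets_exist:
  fixes K :: "'c::metric_space set"
  assumes "compact K"
  shows "\<exists>L. \<forall>m. set (L m) \<subseteq> K \<and> K \<subseteq> (\<Union>q\<in>set (L m). ball q (1 / Suc m))"
proof -
  have "\<exists>xs. set xs \<subseteq> K \<and> K \<subseteq> (\<Union>q\<in>set xs. ball q (1 / Suc m))" for m
  proof -
    obtain C' where "C' \<subseteq> K" "finite C'" "K \<subseteq> (\<Union>c\<in>C'. ball c (1 / Suc m))"
      by (rule compactE_image[OF assms, of K "\<lambda>q. ball q (1 / Suc m)"]) auto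
    moreover obtain xs where "set xs = C'" using finite_list[OF \<open>finite C'\<close>] by blast
    ultimately show ?thesis by blast
  qed
  then show ?thesis by metis
qed

lemma code_exists:
  fixes K :: "'c::metric_space set"
  assumes "compact K"
  shows "\<exists>c :: 'c \<Rightarrow> real. (\<forall>x\<in>K. 0 \<le> c x \<and> c x \<le> 1) \<and>
     (\<forall>e>0. \<exists>d>0. \<forall>x\<in>K. \<forall>x'\<in>K. \<bar>c x - c x'\<bar> < d \<longrightarrow> dist x x' < e)"
proof -
  obtain L where L: "\<And>m. set (L m) \<subseteq> K" "\<And>m. K \<subseteq> (\<Union>q\<in>set (L m). ball q (1 / Suc m))"
    using nets_exist[OF assms] by blast
  define b where "b x n = (case prod_decode n of (m, j) \<Rightarrow>
      if j < length (L m) \<and> dist x (L m ! j) < 1 / Suc m then (1::real) else 0)" for x n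
  have b01: "b x n \<in> {0,1}" for x n by (auto simp: b_def split: prod.split)
  define c where "c x = cs (b x)" for x
  have "\<forall>x\<in>K. 0 \<le> c x \<and> c x \<le> 1" unfolding c_def using cs_bounds b01 by blast
  moreover have "\<exists>d>0. \<forall>x\<in>K. \<forall>x'\<in>K. \<bar>c x - c x'\<bar> < d \<longrightarrow> dist x x' < e" if "e > 0" for e
  proof -
    obtain m where m: "1 / Suc m < e / 2"
      using \<open>e > 0\<close> by (metis half_gt_zero nat_approx_posE)
    define N where "N = Max (insert 0 ((\<lambda>j. prod_encode (m, j)) ` {..<length (L m)}))"
    have N: "prod_encode (m, j) \<le> N" if "j < length (L m)" for j
      unfolding N_def using that by (intro Max_ge) auto
    show ?thesis
    proof (intro exI[of _ "1 / 3 ^ Suc N"] conjI ballI impI)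
      show "0 < 1 / (3::real) ^ Suc N" by simp
      fix x x' assume x: "x \<in> K" and x': "x' \<in> K" and lt: "\<bar>c x - c x'\<bar> < 1 / 3 ^ Suc N"
      have agree: "b x n = b x' n" if "n \<le> N" for n
      proof (rule ccontr)
        assume "b x n \<noteq> b x' n"
        then obtain k where k: "k \<le> n" "\<And>i. i < k \<Longrightarrow> \<not> b x i \<noteq> b x' i" "b x k \<noteq> b x' k"
          using ex_least_nat_le[of "\<lambda>i. b x i \<noteq> b x' i" n] by blast
        have "1 / 3 ^ Suc k \<le> \<bar>c x - c x'\<bar>"
          unfolding c_def by (rule cs_sep[OF b01 b01]) (use k in auto)
        moreover have "1 / (3::real) ^ Suc N \<le> 1 / 3 ^ Suc k"
          using k(1) that by (intro divide_left_mono power_increasing) auto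
        ultimately show False using lt by linarith
      qed
      obtain q where q: "q \<in> set (L m)" "x \<in> ball q (1 / Suc m)" using L(2)[of m] x by blast
      then obtain j where j: "j < length (L m)" "L m ! j = q" by (metis in_set_conv_nth)
      have "b x (prod_encode (m, j)) = 1" using j q by (simp add: b_def dist_commute)
      then have "b x' (prod_encode (m, j)) = 1" using agree[OF N[OF j(1)]] by simp
      then have "dist x' q < 1 / Suc m" using j by (simp add: b_def split: if_splits)
      moreover have "dist x q < 1 / Suc m" using q by (simp add: dist_commute)
      ultimately have "dist x x' < 2 / Suc m" using dist_triangle[of x x' q] by (simp add: dist_commute)
      then show "dist x x' < e" using m by simp
    qed
  qed
  ultimately show ?thesis by blast
qed

lemma decode_exists:
  fixes K :: "'c::metric_space set" and c :: "'c \<Rightarrow> real"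
  assumes K: "compact K" and cb: "\<forall>x\<in>K. 0 \<le> c x \<and> c x \<le> 1"
    and md: "\<forall>e>0. \<exists>d>0. \<forall>x\<in>K. \<forall>x'\<in>K. \<bar>c x - c x'\<bar> < d \<longrightarrow> dist x x' < e"
  shows "\<exists>D \<pi>. compact D \<and> c ` K \<subseteq> D \<and> continuous_on D \<pi> \<and> \<pi> ` D \<subseteq> K \<and> (\<forall>x\<in>K. \<pi> (c x) = x)"
proof -
  define Gr where "Gr = (\<lambda>x. (c x, x)) ` K"
  define Kc where "Kc = closure Gr"
  define D where "D = fst ` Kc"
  have "Gr \<subseteq> {0..1} \<times> K" using cb by (auto simp: Gr_def)
  moreover have "closed ({0..1::real} \<times> K)" using K by (intro closed_Times) (auto intro: compact_imp_closed)
  ultimately have Kcsub: "Kc \<subseteq> {0..1} \<times> K" unfolding Kc_def by (rule closure_minimal)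
  have "compact (({0..1::real} \<times> K) \<inter> Kc)" unfolding Kc_def
    by (intro compact_Int_closed compact_Times compact_Icc closed_closure K)
  then have Kcc: "compact Kc" using Kcsub by (simp add: Int_absorb1)
  have Dc: "compact D" unfolding D_def by (intro compact_continuous_image continuous_intros Kcc)
  have cD: "c ` K \<subseteq> D"
  proof
    fix z assume "z \<in> c ` K"
    then obtain x where x: "x \<in> K" "z = c x" by blast
    have "(c x, x) \<in> Gr" using x(1) unfolding Gr_def by (rule imageI)
    then have "(c x, x) \<in> Kc" unfolding Kc_def by (rule closure_subset[THEN subsetD])
    then have "fst (c x, x) \<in> D" unfolding D_def by (rule imageI)
    then show "z \<in> D" using x by simp
  qed
  have key: "\<exists>d>0. \<forall>p\<in>Kc. \<forall>p'\<in>Kc. \<bar>fst p - fst p'\<bar> < d \<longrightarrow> dist (snd p) (snd p') < e" if "e > 0" for e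
  proof -
    obtain d0 where d0: "d0 > 0" "\<forall>x\<in>K. \<forall>x'\<in>K. \<bar>c x - c x'\<bar> < d0 \<longrightarrow> dist x x' < e / 3"
    proof -
      have "e / 3 > 0" using \<open>e > 0\<close> by simp
      then show ?thesis using md that by blast
    qed
    have approx: "\<exists>g\<in>K. \<bar>c g - fst p\<bar> < d0 / 3 \<and> dist g (snd p) < e / 3" if "p \<in> Kc" for p
    proof -
      have mpos: "min (d0/3) (e/3) > 0" using d0 \<open>e > 0\<close> by simp
      have "p \<in> closure Gr" using \<open>p \<in> Kc\<close> by (simp add: Kc_def)
      then obtain q where q: "q \<in> Gr" "dist q p < min (d0/3) (e/3)"
        using mpos unfolding closure_approachable by blast
      then obtain g where g: "g \<in> K" "q = (c g, g)" by (auto simp: Gr_def)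
      have "dist (fst q) (fst p) < d0 / 3" "dist (snd q) (snd p) < e / 3"
        using q(2) dist_fst_le[of q p] dist_snd_le[of q p] by linarith+
      then have "\<bar>c g - fst p\<bar> < d0 / 3" "dist g (snd p) < e / 3" using g by (simp_all add: dist_real_def)
      then show ?thesis using g(1) by blast
    qed
    show ?thesis
    proof (intro exI[of _ "d0/3"] conjI ballI impI)
      show "0 < d0 / 3" using d0 by simp
      fix p p' assume p: "p \<in> Kc" and p': "p' \<in> Kc" and lt: "\<bar>fst p - fst p'\<bar> < d0 / 3"
      obtain g where g: "g \<in> K" "\<bar>c g - fst p\<bar> < d0 / 3" "dist g (snd p) < e / 3" using approx[OF p] by blast
      obtain g' where g': "g' \<in> K" "\<bar>c g' - fst p'\<bar> < d0 / 3" "dist g' (snd p') < e / 3" using approx[OF p'] by blast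
      have "\<bar>c g - c g'\<bar> < d0" using g g' lt by linarith
      then have "dist g g' < e / 3" using d0(2) g(1) g'(1) by blast
      then show "dist (snd p) (snd p') < e"
        using g(3) g'(3) dist_triangle[of "snd p" "snd p'" g] dist_triangle[of g "snd p'" g']
        by (simp add: dist_commute)
    qed
  qed
  have uniq: "snd p = snd p'" if "p \<in> Kc" "p' \<in> Kc" "fst p = fst p'" for p p'
  proof -
    have lt: "dist (snd p) (snd p') < e" if epos: "e > 0" for e
    proof -
      obtain d where "d > 0" "\<forall>p\<in>Kc. \<forall>p'\<in>Kc. \<bar>fst p - fst p'\<bar> < d \<longrightarrow> dist (snd p) (snd p') < e"
        using key[OF epos] by blast
      then show ?thesis using \<open>p \<in> Kc\<close> \<open>p' \<in> Kc\<close> \<open>fst p = fst p'\<close> by simp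
    qed
    show ?thesis
    proof (rule ccontr)
      assume "snd p \<noteq> snd p'"
      then have "dist (snd p) (snd p') > 0" by simp
      from lt[OF this] show False by simp
    qed
  qed
  define \<pi> where "\<pi> z = snd (SOME p. p \<in> Kc \<and> fst p = z)" for z
  have pi_eq: "\<pi> (fst p) = snd p" if "p \<in> Kc" for p
  proof -
    have "(SOME q. q \<in> Kc \<and> fst q = fst p) \<in> Kc \<and> fst (SOME q. q \<in> Kc \<and> fst q = fst p) = fst p"
      by (rule someI[of _ p]) (use that in auto)
    then show ?thesis unfolding \<pi>_def using uniq[of "SOME q. q \<in> Kc \<and> fst q = fst p" p] that by simp
  qed
  have piD: "\<exists>p\<in>Kc. z = fst p \<and> \<pi> z = snd p" if "z \<in> D" for z
  proof -
    from that obtain p where "p \<in> Kc" "z = fst p" unfolding D_def by blast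
    then show ?thesis using pi_eq by blast
  qed
  have "continuous_on D \<pi>" unfolding continuous_on_iff
  proof (intro ballI allI impI)
    fix z e assume z: "z \<in> D" and e: "(e::real) > 0"
    obtain d where d: "d > 0" "\<forall>p\<in>Kc. \<forall>p'\<in>Kc. \<bar>fst p - fst p'\<bar> < d \<longrightarrow> dist (snd p) (snd p') < e"
      using key[OF e] by blast
    show "\<exists>d>0. \<forall>z'\<in>D. dist z' z < d \<longrightarrow> dist (\<pi> z') (\<pi> z) < e"
    proof (intro exI[of _ d] conjI ballI impI)
      fix z' assume z': "z' \<in> D" "dist z' z < d"
      obtain p where p: "p \<in> Kc" "z = fst p" "\<pi> z = snd p" using piD[OF z] by blast
      obtain p' where p': "p' \<in> Kc" "z' = fst p'" "\<pi> z' = snd p'" using piD[OF z'(1)] by blast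
      have "\<bar>fst p' - fst p\<bar> < d" using p p' z'(2) by (simp add: dist_real_def)
      then have "dist (snd p') (snd p) < e" using d(2) p(1) p'(1) by blast
      then show "dist (\<pi> z') (\<pi> z) < e" using p p' by simp
    qed (use d in auto)
  qed
  moreover have "\<pi> ` D \<subseteq> K"
  proof
    fix w assume "w \<in> \<pi> ` D"
    then obtain z where "z \<in> D" "w = \<pi> z" by blast
    then obtain p where "p \<in> Kc" "w = snd p" using piD by blast
    then show "w \<in> K" using Kcsub by auto
  qed
  moreover have "\<forall>x\<in>K. \<pi> (c x) = x"
  proof
    fix x assume "x \<in> K"
    then have "(c x, x) \<in> Gr" unfolding Gr_def by (rule imageI)
    then have "(c x, x) \<in> Kc" unfolding Kc_def by (rule closure_subset[THEN subsetD])
    from pi_eq[OF this] show "\<pi> (c x) = x" by simp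
  qed
  ultimately show ?thesis using Dc cD by blast
qed

lemma emeasure_dmeas_full:
  assumes "\<And>n. p n \<in> space M" "A \<in> sets M" "\<And>n. p n \<in> A" "\<And>n. 0 \<le> w n" "summable w"
  shows "emeasure (dmeas M w p) A = ennreal (suminf w)"
  using assms by (simp add: emeasure_dmeas suminf_ennreal2)

lemma dmeas_prob:
  assumes "\<And>n. p n \<in> space M" "\<And>n. 0 \<le> w n" "summable w" "suminf w = 1"
  shows "prob_space (dmeas M w p)"
proof (rule prob_spaceI)
  show "emeasure (dmeas M w p) (space (dmeas M w p)) = 1"
    using emeasure_dmeas_full[of p M "space M" w] assms by simp
qed

definition wT :: "nat \<Rightarrow> nat \<Rightarrow> real" where
  "wT T t = (if t < T then 1 / real T else 0)"

lemma wT_nonneg: "0 \<le> wT T t" by (simp add: wT_def)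

lemma wT_summable: "summable (wT T)"
  by (rule summable_finite[of "{..<T}"]) (auto simp: wT_def)

lemma wT_suminf: "suminf (wT T) = (\<Sum>t<T. wT T t)"
  by (rule suminf_finite) (auto simp: wT_def)

lemma wT_sum1: "T > 0 \<Longrightarrow> suminf (wT T) = 1"
  by (simp add: wT_suminf wT_def)

lemma wT_series: "(\<Sum>n. wT T n * g n) = (\<Sum>t<T. g t) / real T"
proof -
  have "(\<Sum>n. wT T n * g n) = (\<Sum>n<T. wT T n * g n)"
    by (rule suminf_finite) (auto simp: wT_def)
  also have "\<dots> = (\<Sum>n<T. g n) / real T"
    by (simp add: wT_def sum_divide_distrib)
  finally show ?thesis .
qed

definition occ :: "'c::topological_space set \<Rightarrow> nat \<Rightarrow> (nat \<Rightarrow> 'c) \<Rightarrow> 'c measure" where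
  "occ K T x = dmeas (restrict_space borel K) (wT T) x"

lemma occ_integral:
  fixes g :: "'c::topological_space \<Rightarrow> real"
  assumes "\<And>t. x t \<in> K" "g \<in> borel_measurable (restrict_space borel K)" "\<And>y. y \<in> K \<Longrightarrow> \<bar>g y\<bar> \<le> B"
  shows "integral\<^sup>L (occ K T x) g = (\<Sum>t<T. g (x t)) / real T"
  unfolding occ_def
  by (subst dmeas_integral[where B=B]) (use assms in \<open>auto simp: wT_nonneg wT_summable wT_series space_restrict_space\<close>)

lemma compact_bound:
  fixes \<phi> :: "'c::metric_space \<Rightarrow> real"
  assumes "compact K" "continuous_on K \<phi>"
  shows "\<exists>B\<ge>0. \<forall>y\<in>K. \<bar>\<phi> y\<bar> \<le> B"
proof -
  have "bounded (\<phi> ` K)" by (intro compact_imp_bounded compact_continuous_image assms)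
  then obtain B where "\<forall>z\<in>\<phi> ` K. norm z \<le> B" by (auto simp: bounded_iff)
  then show ?thesis by (intro exI[of _ "max B 0"]) auto
qed

lemma seq_compact_occ:
  fixes K :: "'c::metric_space set" and x :: "nat \<Rightarrow> 'c"
  assumes K: "compact K" and xK: "\<And>t. x t \<in> K"
  shows "\<exists>r \<gamma>. strict_mono r \<and> \<gamma> \<in> prob_on K \<and> weak_conv K (\<lambda>k. occ K (Suc (r k)) x) \<gamma>"
proof -
  obtain c :: "'c \<Rightarrow> real" where cb: "\<forall>x\<in>K. 0 \<le> c x \<and> c x \<le> 1"
    and md: "\<forall>e>0. \<exists>d>0. \<forall>x\<in>K. \<forall>x'\<in>K. \<bar>c x - c x'\<bar> < d \<longrightarrow> dist x x' < e"
    using code_exists[OF K] by blast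
  obtain D \<pi> where Dc: "compact D" and cD: "c ` K \<subseteq> D" and pic: "continuous_on D \<pi>"
    and piD: "\<pi> ` D \<subseteq> K" and pic': "\<forall>x\<in>K. \<pi> (c x) = x"
    using decode_exists[OF K cb md] by blast
  have cxD: "c (x t) \<in> D" for t using cD xK by blast
  have Dne: "D \<noteq> {}" using cxD by blast
  have Dcl: "closed D" using Dc by (rule compact_imp_closed)
  define \<nu> where "\<nu> n = dmeas borel (wT (Suc n)) (\<lambda>t. c (x t))" for n
  have rd: "real_distribution (\<nu> n)" for n
  proof -
    have "prob_space (\<nu> n)" unfolding \<nu>_def
      by (rule dmeas_prob) (auto simp: wT_nonneg wT_summable wT_sum1)
    then show ?thesis by (simp add: real_distribution_def real_distribution_axioms_def \<nu>_def)
  qed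
  have meas1: "measure (\<nu> n) {-1<..1} = 1" for n
  proof -
    have "emeasure (\<nu> n) {-1<..1} = ennreal (suminf (wT (Suc n)))" unfolding \<nu>_def
      by (rule emeasure_dmeas_full) (use cb xK in \<open>auto simp: wT_nonneg wT_summable, smt (verit)\<close>)
    then show "measure (\<nu> n) {-1<..1} = 1" by (simp add: measure_def wT_sum1)
  qed
  have "tight \<nu>" unfolding tight_def
  proof (intro conjI allI impI)
    show "real_distribution (\<nu> n)" for n by (rule rd)
    fix e :: real assume "e > 0"
    then show "\<exists>a b::real. a < b \<and> (\<forall>n. measure (\<nu> n) {a<..b} > 1 - e)"
      using meas1 by (intro exI[of _ "-1"] exI[of _ "1"]) auto
  qed
  then obtain r Mlim where r: "strict_mono r" and Mrd: "real_distribution Mlim"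
    and wc: "weak_conv_m (\<nu> \<circ> id \<circ> r) Mlim"
    using tight_imp_convergent_subsubsequence[of \<nu> id] by (auto simp: strict_mono_def)
  interpret Mlim: real_distribution Mlim by (rule Mrd)
  have conv: "(\<lambda>k. integral\<^sup>L (\<nu> (r k)) h) \<longlonglongrightarrow> integral\<^sup>L Mlim h"
    if "\<And>z. isCont h z" "\<And>z. norm (h z) \<le> B" for h :: "real \<Rightarrow> real" and B
    using weak_conv_imp_integral_bdd_continuous_conv[of "\<nu> \<circ> id \<circ> r" Mlim h B] rd Mrd wc that
    by (simp add: o_def)
  have nuint: "integral\<^sup>L (\<nu> n) h = (\<Sum>t<Suc n. h (c (x t))) / real (Suc n)"
    if "h \<in> borel_measurable borel" "\<And>z. \<bar>h z\<bar> \<le> B" for h :: "real \<Rightarrow> real" and n B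
    unfolding \<nu>_def
    by (subst dmeas_integral[where B=B]) (use that in \<open>auto simp: wT_nonneg wT_summable wT_series\<close>)
  define hD where "hD z = min 1 (infdist z D)" for z
  have hDc: "isCont hD z" for z unfolding hD_def by (intro continuous_intros)
  have hDb: "norm (hD z) \<le> 1" for z unfolding hD_def using infdist_nonneg[of z D] by auto
  have hDm: "hD \<in> borel_measurable borel"
    using hDc by (intro borel_measurable_continuous_onI continuous_at_imp_continuous_on) auto
  have "(\<lambda>k. integral\<^sup>L (\<nu> (r k)) hD) \<longlonglongrightarrow> integral\<^sup>L Mlim hD" by (rule conv[OF hDc hDb])
  moreover have "integral\<^sup>L (\<nu> n) hD = 0" for n
  proof -
    have "integral\<^sup>L (\<nu> n) hD = (\<Sum>t<Suc n. hD (c (x t))) / real (Suc n)"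
      by (rule nuint[OF hDm, of 1]) (use hDb in auto)
    also have "\<dots> = 0" using cxD by (simp add: hD_def infdist_zero)
    finally show ?thesis .
  qed
  ultimately have "integral\<^sup>L Mlim hD = 0" using LIMSEQ_unique[of "\<lambda>k. 0" 0 "integral\<^sup>L Mlim hD"] by simp
  moreover have "integrable Mlim hD"
    by (rule Mlim.integrable_const_bound[where B=1]) (use hDb hDm in auto)
  moreover have "AE z in Mlim. 0 \<le> hD z" by (intro AE_I2) (simp add: hD_def infdist_nonneg)
  ultimately have "AE z in Mlim. hD z = 0"
    using integral_nonneg_eq_0_iff_AE[of Mlim hD] by blast
  then have AED: "AE z in Mlim. z \<in> D"
  proof (rule AE_mp, intro AE_I2 impI)
    fix z assume "hD z = 0"
    then have "infdist z D = 0" unfolding hD_def by (simp add: min_def split: if_splits)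
    then show "z \<in> D" using in_closed_iff_infdist_zero[OF Dcl Dne] by blast
  qed
  define pb where "pb z = (if z \<in> D then \<pi> z else x 0)" for z
  have pbm: "pb \<in> measurable Mlim (restrict_space borel K)"
  proof (rule measurable_restrict_space2)
    show "pb \<in> space Mlim \<rightarrow> K" using piD xK by (auto simp: pb_def image_subset_iff)
    have "pb \<in> borel_measurable borel" unfolding pb_def
      using Dcl pic by (intro borel_measurable_continuous_on_if) auto
    then show "pb \<in> measurable Mlim borel" by (simp add: measurable_cong_sets[OF Mlim.events_eq_borel refl])
  qed
  define \<gamma> where "\<gamma> = distr Mlim (restrict_space borel K) pb"
  have gprob: "\<gamma> \<in> prob_on K" unfolding prob_on_def \<gamma>_def
    using Mlim.prob_space_distr[OF pbm] by simp
  have "weak_conv K (\<lambda>k. occ K (Suc (r k)) x) \<gamma>" unfolding weak_conv_def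
  proof (intro allI impI)
    fix \<phi> :: "'c \<Rightarrow> real" assume phic: "continuous_on K \<phi>"
    obtain B where B: "B \<ge> 0" "\<forall>y\<in>K. \<bar>\<phi> y\<bar> \<le> B" using compact_bound[OF K phic] by blast
    have phim: "\<phi> \<in> borel_measurable (restrict_space borel K)"
      by (rule borel_measurable_continuous_on_restrict[OF phic])
    have c0: "continuous_on D (\<lambda>z. \<phi> (\<pi> z))"
      by (rule continuous_on_compose2[OF phic pic piD])
    obtain \<psi> where psic: "continuous_on UNIV \<psi>" and psieq: "\<And>z. z \<in> D \<Longrightarrow> \<psi> z = \<phi> (\<pi> z)"
      and psib: "\<And>z. norm (\<psi> z) \<le> B"
    proof (rule Tietze[OF c0 _ B(1), of UNIV])
      show "closedin (top_of_set UNIV) D" using Dcl by simp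
      show "norm (\<phi> (\<pi> z)) \<le> B" if "z \<in> D" for z using B piD that by auto
    qed auto
    have psim: "\<psi> \<in> borel_measurable borel" by (rule borel_measurable_continuous_onI[OF psic])
    have "integral\<^sup>L \<gamma> \<phi> = integral\<^sup>L Mlim (\<lambda>z. \<phi> (pb z))"
      unfolding \<gamma>_def by (rule integral_distr[OF pbm phim])
    also have "\<dots> = integral\<^sup>L Mlim \<psi>"
    proof (rule integral_cong_AE)
      show "(\<lambda>z. \<phi> (pb z)) \<in> borel_measurable Mlim" using phim pbm by measurable
      show "\<psi> \<in> borel_measurable Mlim" using psim by (simp add: measurable_cong_sets[OF Mlim.events_eq_borel refl])
      show "AE z in Mlim. \<phi> (pb z) = \<psi> z" using AED by eventually_elim (simp add: pb_def psieq)
    qed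
    finally have geq: "integral\<^sup>L \<gamma> \<phi> = integral\<^sup>L Mlim \<psi>" .
    have "integral\<^sup>L (occ K (Suc (r k)) x) \<phi> = integral\<^sup>L (\<nu> (r k)) \<psi>" for k
    proof -
      have "integral\<^sup>L (\<nu> (r k)) \<psi> = (\<Sum>t<Suc (r k). \<psi> (c (x t))) / real (Suc (r k))"
        by (rule nuint[OF psim, of B]) (use psib in auto)
      also have "\<dots> = (\<Sum>t<Suc (r k). \<phi> (x t)) / real (Suc (r k))"
        using psieq cxD pic' xK by simp
      also have "\<dots> = integral\<^sup>L (occ K (Suc (r k)) x) \<phi>"
        by (rule occ_integral[OF xK phim, of B, symmetric]) (use B in auto)
      finally show ?thesis by simp
    qed
    then show "(\<lambda>k. integral\<^sup>L (occ K (Suc (r k)) x) \<phi>) \<longlonglongrightarrow> integral\<^sup>L \<gamma> \<phi>"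
      using conv[of \<psi> B] psic psib geq by (simp add: continuous_on_eq_continuous_at)
  qed
  then show ?thesis using r gprob by blast
qed

lemma G_compact:
  fixes Y :: "'a::euclidean_space set" and U0 :: "'b::metric_space set"
    and U :: "'a \<Rightarrow> 'b set" and f :: "'a \<Rightarrow> 'b \<Rightarrow> 'a"
  assumes Yc: "compact Y" and U0c: "compact U0"
    and UU: "\<forall>y\<in>Y. U y \<subseteq> U0 \<and> compact (U y)"
    and usc: "usc_on Y U"
    and fc: "continuous_on (UNIV \<times> U0) (\<lambda>(y, u). f y u)"
  shows "compact (Gset Y U f)"
proof -
  have sub: "Gset Y U f \<subseteq> Y \<times> U0" using UU by (auto simp: Gset_def Aset_def)
  have "closed (Gset Y U f)" unfolding closed_sequential_limits
  proof (intro allI impI, elim conjE)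
    fix s and l :: "'a \<times> 'b"
    assume sG: "\<forall>n. s n \<in> Gset Y U f" and sl: "s \<longlonglongrightarrow> l"
    obtain y u where l: "l = (y, u)" by (cases l)
    define ys where "ys n = fst (s n)" for n
    define us where "us n = snd (s n)" for n
    have yl: "ys \<longlonglongrightarrow> y" unfolding ys_def using tendsto_fst[OF sl] l by simp
    have ul: "us \<longlonglongrightarrow> u" unfolding us_def using tendsto_snd[OF sl] l by simp
    have ysY: "ys n \<in> Y" for n using sG[rule_format, of n] by (cases "s n") (auto simp: ys_def Gset_def)
    have usA1: "us n \<in> U (ys n) \<and> f (ys n) (us n) \<in> Y" for n
      using sG[rule_format, of n] by (cases "s n") (auto simp: ys_def us_def Gset_def Aset_def)
    have usA: "us n \<in> U (ys n)" "f (ys n) (us n) \<in> Y" for n using usA1[of n] by auto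
    have usU0: "us n \<in> U0" for n using usA(1) ysY UU by blast
    have clY: "closed Y" using Yc by (rule compact_imp_closed)
    have clU0: "closed U0" using U0c by (rule compact_imp_closed)
    have yY: "y \<in> Y" by (rule closed_sequentially[OF clY ysY yl])
    have uU0: "u \<in> U0" by (rule closed_sequentially[OF clU0 usU0 ul])
    have c1: "(\<lambda>n. (ys n, us n)) \<longlonglongrightarrow> (y, u)" by (intro tendsto_Pair yl ul)
    have c2: "(y, u) \<in> UNIV \<times> U0" using uU0 by simp
    have c3: "\<forall>\<^sub>F n in sequentially. (ys n, us n) \<in> UNIV \<times> U0" using usU0 by simp
    have "((\<lambda>n. (\<lambda>(y, u). f y u) (ys n, us n))) \<longlonglongrightarrow> (\<lambda>(y, u). f y u) (y, u)"
      by (rule continuous_on_tendsto_compose[OF fc c1 c2 c3])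
    then have fl: "(\<lambda>n. f (ys n) (us n)) \<longlonglongrightarrow> f y u" by (simp add: o_def)
    have fY: "f y u \<in> Y" by (rule closed_sequentially[OF clY usA(2) fl])
    have uUy: "u \<in> U y"
    proof (rule ccontr)
      assume nu: "u \<notin> U y"
      have "compact (U y)" using UU yY by blast
      then have "closed (U y)" by (rule compact_imp_closed)
      then have "open (- U y)" by auto
      moreover have "u \<in> - U y" using nu by simp
      ultimately obtain r where r: "r > 0" "ball u r \<subseteq> - U y" by (rule openE)
      define V where "V = - cball u (r/2)"
      have Vo: "open V" unfolding V_def by auto
      have UV: "U y \<subseteq> V"
      proof
        fix v assume "v \<in> U y"
        then have "v \<notin> ball u r" using r by blast
        then have "dist u v \<ge> r" by simp
        then show "v \<in> V" using r by (simp add: V_def)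
      qed
      obtain e where e: "e > 0" "\<forall>y'\<in>Y. dist y' y < e \<longrightarrow> U y' \<subseteq> V"
      proof -
        have "\<forall>V. open V \<and> U y \<subseteq> V \<longrightarrow> (\<exists>e>0. \<forall>y'\<in>Y. dist y' y < e \<longrightarrow> U y' \<subseteq> V)"
          using usc yY unfolding usc_on_def by blast
        then have "\<exists>e>0. \<forall>y'\<in>Y. dist y' y < e \<longrightarrow> U y' \<subseteq> V" using Vo UV by blast
        then show ?thesis using that by blast
      qed
      have "\<forall>\<^sub>F n in sequentially. dist (ys n) y < e" using yl e(1) by (rule tendstoD)
      moreover have "\<forall>\<^sub>F n in sequentially. dist (us n) u < r/2" using ul r(1) by (intro tendstoD) auto
      ultimately have "\<forall>\<^sub>F n in sequentially. dist (ys n) y < e \<and> dist (us n) u < r/2"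
        by (rule eventually_conj)
      then obtain n where n: "dist (ys n) y < e" "dist (us n) u < r/2"
      proof -
        from \<open>\<forall>\<^sub>F n in sequentially. dist (ys n) y < e \<and> dist (us n) u < r/2\<close>
        obtain N where "\<forall>n\<ge>N. dist (ys n) y < e \<and> dist (us n) u < r/2"
          unfolding eventually_sequentially by blast
        then show ?thesis using that by blast
      qed
      have "U (ys n) \<subseteq> V" using e(2) ysY n(1) by blast
      then have "us n \<in> V" using usA(1) by (rule subsetD)
      then show False using n(2) by (simp add: V_def dist_commute)
    qed
    show "l \<in> Gset Y U f" using l yY uUy fY by (simp add: Gset_def Aset_def)
  qed
  moreover have "compact (Y \<times> U0)" by (intro compact_Times Yc U0c)
  ultimately have "compact ((Y \<times> U0) \<inter> Gset Y U f)" by (intro compact_Int_closed)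
  then show ?thesis using sub by (simp add: Int_absorb1)
qed

lemma ennreal_w_ind: "0 \<le> w \<Longrightarrow> ennreal w * indicator A x = ennreal (w * indicator A x)"
  by (simp add: indicator_def)

lemma emeasure_dmeas_real:
  assumes "\<And>n. p n \<in> space M" "A \<in> sets M" "\<And>n. 0 \<le> w n" "summable w"
  shows "emeasure (dmeas M w p) A = ennreal (\<Sum>n. w n * indicator A (p n))"
proof -
  have s: "summable (\<lambda>n. w n * indicator A (p n))"
    by (rule summable_comparison_test'[OF assms(4), where N=0]) (use assms(3) in \<open>auto simp: indicator_def\<close>)
  show ?thesis using assms
    by (simp add: emeasure_dmeas ennreal_w_ind suminf_ennreal2[OF _ s])
qed

lemma Gamma_repr:
  assumes "\<gamma> \<in> Gamma Y U f T y0"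
  shows "\<exists>y u. admissible_fin Y U f T y0 y u \<and> T > 0 \<and> (\<forall>t<T. (y t, u t) \<in> Gset Y U f) \<and>
    (\<forall>g B. g \<in> borel_measurable (restrict_space borel (Gset Y U f)) \<longrightarrow> (\<forall>z\<in>Gset Y U f. \<bar>g z\<bar> \<le> B) \<longrightarrow>
       integral\<^sup>L \<gamma> g = (\<Sum>t<T. g (y t, u t)) / real T)"
proof -
  let ?K = "Gset Y U f"
  let ?M = "restrict_space borel ?K"
  obtain y u where adm: "admissible_fin Y U f T y0 y u" and pr: "\<gamma> \<in> prob_on ?K"
    and em: "\<forall>Q \<in> sets \<gamma>. emeasure \<gamma> Q = ennreal ((\<Sum>t<T. indicator Q (y t, u t)) / real T)"
    using assms unfolding Gamma_def by blast
  have sg: "sets \<gamma> = sets ?M" and ps: "prob_space \<gamma>" using pr by (auto simp: prob_on_def)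
  have inK: "(y t, u t) \<in> ?K" if "t < T" for t using adm that by (auto simp: admissible_fin_def Gset_def)
  have Tpos: "T > 0"
  proof (rule ccontr)
    assume "\<not> T > 0"
    then have "T = 0" by simp
    then have "emeasure \<gamma> (space \<gamma>) = 0" using em by simp
    moreover have "emeasure \<gamma> (space \<gamma>) = 1" using ps by (rule prob_space.emeasure_space_1)
    ultimately show False by simp
  qed
  define p where "p t = (y (min t (T - 1)), u (min t (T - 1)))" for t
  have pK: "p t \<in> space ?M" for t using inK Tpos by (simp add: p_def space_restrict_space)
  have peq: "t < T \<Longrightarrow> p t = (y t, u t)" for t by (simp add: p_def)
  have geq: "\<gamma> = dmeas ?M (wT T) p"
  proof (rule measure_eqI)
    show "sets \<gamma> = sets (dmeas ?M (wT T) p)" using sg by simp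
    fix A assume A: "A \<in> sets \<gamma>"
    have "emeasure (dmeas ?M (wT T) p) A = ennreal (\<Sum>n. wT T n * indicator A (p n))"
      by (rule emeasure_dmeas_real) (use pK A sg in \<open>auto simp: wT_nonneg wT_summable\<close>)
    also have "\<dots> = ennreal ((\<Sum>t<T. indicator A (p t)) / real T)" by (simp add: wT_series)
    also have "\<dots> = ennreal ((\<Sum>t<T. indicator A (y t, u t)) / real T)" using peq by simp
    also have "\<dots> = emeasure \<gamma> A" using em A by simp
    finally show "emeasure \<gamma> A = emeasure (dmeas ?M (wT T) p) A" by simp
  qed
  have "integral\<^sup>L \<gamma> g = (\<Sum>t<T. g (y t, u t)) / real T"
    if g: "g \<in> borel_measurable ?M" and B: "\<forall>z\<in>?K. \<bar>g z\<bar> \<le> B" for g B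
  proof -
    have "integral\<^sup>L \<gamma> g = (\<Sum>n. wT T n * g (p n))" unfolding geq
      by (rule dmeas_integral[OF pK wT_nonneg wT_summable g, where B=B]) (use B in \<open>auto simp: space_restrict_space\<close>)
    also have "\<dots> = (\<Sum>t<T. g (p t)) / real T" by (simp add: wT_series)
    also have "\<dots> = (\<Sum>t<T. g (y t, u t)) / real T" using peq by simp
    finally show ?thesis .
  qed
  then show ?thesis using adm Tpos inK by blast
qed

lemma Theta_repr:
  assumes "\<gamma> \<in> Theta Y U f \<alpha> y0" "0 < \<alpha>" "\<alpha> < 1"
  shows "\<exists>y u. admissible_inf Y U f y0 y u \<and> (\<forall>t. (y t, u t) \<in> Gset Y U f) \<and>
    (\<forall>g B. g \<in> borel_measurable (restrict_space borel (Gset Y U f)) \<longrightarrow> (\<forall>z\<in>Gset Y U f. \<bar>g z\<bar> \<le> B) \<longrightarrow>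
       integral\<^sup>L \<gamma> g = (1 - \<alpha>) * (\<Sum>t. \<alpha> ^ t * g (y t, u t)))"
proof -
  let ?K = "Gset Y U f"
  let ?M = "restrict_space borel ?K"
  obtain y u where adm: "admissible_inf Y U f y0 y u" and pr: "\<gamma> \<in> prob_on ?K"
    and em: "\<forall>Q \<in> sets \<gamma>. emeasure \<gamma> Q = ennreal ((1 - \<alpha>) * (\<Sum>t. \<alpha> ^ t * indicator Q (y t, u t)))"
    using assms unfolding Theta_def by blast
  have sg: "sets \<gamma> = sets ?M" using pr by (auto simp: prob_on_def)
  have inK: "(y t, u t) \<in> ?K" for t using adm by (auto simp: admissible_inf_def Gset_def)
  define p where "p t = (y t, u t)" for t
  have pK: "p t \<in> space ?M" for t using inK by (simp add: p_def space_restrict_space)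
  define w where "w t = (1 - \<alpha>) * \<alpha> ^ t" for t
  have wn: "0 \<le> w t" for t using assms by (simp add: w_def)
  have sgeo: "summable (\<lambda>t. \<alpha> ^ t)" using assms by (intro summable_geometric) auto
  have ws: "summable w" unfolding w_def by (intro summable_mult sgeo)
  have wser: "(\<Sum>n. w n * g n) = (1 - \<alpha>) * (\<Sum>t. \<alpha> ^ t * g t)" if "summable (\<lambda>t. \<alpha> ^ t * g t)" for g
    unfolding w_def using suminf_mult[OF that, of "1 - \<alpha>"] by (simp add: algebra_simps)
  have geq: "\<gamma> = dmeas ?M w p"
  proof (rule measure_eqI)
    show "sets \<gamma> = sets (dmeas ?M w p)" using sg by simp
    fix A assume A: "A \<in> sets \<gamma>"
    have sA: "summable (\<lambda>t. \<alpha> ^ t * indicator A (p t))"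
      by (rule summable_comparison_test'[OF sgeo, where N=0]) (use assms in \<open>auto simp: indicator_def\<close>)
    have "emeasure (dmeas ?M w p) A = ennreal (\<Sum>n. w n * indicator A (p n))"
      by (rule emeasure_dmeas_real) (use pK A sg wn ws in auto)
    also have "\<dots> = ennreal ((1 - \<alpha>) * (\<Sum>t. \<alpha> ^ t * indicator A (y t, u t)))"
      using wser[OF sA] by (simp add: p_def)
    also have "\<dots> = emeasure \<gamma> A" using em A by simp
    finally show "emeasure \<gamma> A = emeasure (dmeas ?M w p) A" by simp
  qed
  have "integral\<^sup>L \<gamma> g = (1 - \<alpha>) * (\<Sum>t. \<alpha> ^ t * g (y t, u t))"
    if g: "g \<in> borel_measurable ?M" and B: "\<forall>z\<in>?K. \<bar>g z\<bar> \<le> B" for g B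
  proof -
    have sA: "summable (\<lambda>t. \<alpha> ^ t * g (p t))"
    proof (rule summable_comparison_test'[OF summable_mult[OF sgeo, of B], where N=0])
      fix n show "norm (\<alpha> ^ n * g (p n)) \<le> B * \<alpha> ^ n"
        using B inK assms by (auto simp: p_def abs_mult mult.commute intro!: mult_left_mono)
    qed
    have "integral\<^sup>L \<gamma> g = (\<Sum>n. w n * g (p n))" unfolding geq
      by (rule dmeas_integral[OF pK wn ws g, where B=B]) (use B in \<open>auto simp: space_restrict_space\<close>)
    also have "\<dots> = (1 - \<alpha>) * (\<Sum>t. \<alpha> ^ t * g (y t, u t))" using wser[OF sA] by (simp add: p_def)
    finally show ?thesis .
  qed
  then show ?thesis using adm inK by blast
qed

lemma telescope_weighted:
  fixes a :: "nat \<Rightarrow> real"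
  shows "(\<Sum>s<T. (real T - 1 - real s) * (a (Suc s) - a s)) = (\<Sum>t<T. (a t - a 0))"
proof (induction T)
  case 0 then show ?case by simp
next
  case (Suc T)
  have "(\<Sum>s<Suc T. (real (Suc T) - 1 - real s) * (a (Suc s) - a s))
      = (\<Sum>s<T. (real T - 1 - real s) * (a (Suc s) - a s)) + (\<Sum>s<T. (a (Suc s) - a s))"
  proof -
    have "(\<Sum>s<Suc T. (real (Suc T) - 1 - real s) * (a (Suc s) - a s))
        = (\<Sum>s<T. (real (Suc T) - 1 - real s) * (a (Suc s) - a s))" by simp
    also have "\<dots> = (\<Sum>s<T. (real T - 1 - real s) * (a (Suc s) - a s) + (a (Suc s) - a s))"
      by (intro sum.cong) (auto simp: algebra_simps)
    also have "\<dots> = (\<Sum>s<T. (real T - 1 - real s) * (a (Suc s) - a s)) + (\<Sum>s<T. (a (Suc s) - a s))"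
      by (rule sum.distrib)
    finally show ?thesis .
  qed
  also have "(\<Sum>s<T. (a (Suc s) - a s)) = a T - a 0" by (rule sum_lessThan_telescope)
  finally show ?case using Suc by simp
qed

lemma suminf_cut:
  fixes w g :: "nat \<Rightarrow> real"
  assumes "\<And>n. n \<ge> T \<Longrightarrow> w n = 0"
  shows "(\<Sum>n. w n * g n) = (\<Sum>n<T. w n * g n)"
  by (rule suminf_finite) (use assms in auto)

lemma G_sub:
  assumes "\<forall>y\<in>Y. U y \<subseteq> U0 \<and> compact (U y)"
  shows "Gset Y U f \<subseteq> UNIV \<times> U0"
  using assms by (auto simp: Gset_def Aset_def)

lemma cont_gh:
  fixes \<phi> :: "'a::topological_space \<Rightarrow> real"
  assumes fc: "continuous_on (UNIV \<times> U0) (\<lambda>(y, u). f y u)"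
    and Ks: "Gset Y U f \<subseteq> UNIV \<times> U0" and phic: "continuous_on Y \<phi>"
  shows "continuous_on (Gset Y U f) (\<lambda>(y, u). \<phi> (f y u) - \<phi> y)"
    and "continuous_on (Gset Y U f) (\<lambda>(y, u). \<phi> y - c)"
proof -
  have f1: "continuous_on (Gset Y U f) (\<lambda>(y, u). f y u)" by (rule continuous_on_subset[OF fc Ks])
  have im1: "(\<lambda>(y, u). f y u) ` Gset Y U f \<subseteq> Y" by (auto simp: Gset_def Aset_def)
  have im2: "fst ` Gset Y U f \<subseteq> Y" by (auto simp: Gset_def)
  have c1: "continuous_on (Gset Y U f) (\<lambda>x. \<phi> ((\<lambda>(y, u). f y u) x))"
    by (rule continuous_on_compose2[OF phic f1 im1])
  have c2: "continuous_on (Gset Y U f) (\<lambda>x. \<phi> (fst x))"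
    by (rule continuous_on_compose2[OF phic continuous_on_fst[OF continuous_on_id] im2])
  have "continuous_on (Gset Y U f) (\<lambda>x. \<phi> ((\<lambda>(y, u). f y u) x) - \<phi> (fst x))"
    by (intro continuous_on_diff c1 c2)
  then show "continuous_on (Gset Y U f) (\<lambda>(y, u). \<phi> (f y u) - \<phi> y)"
    by (simp add: case_prod_beta')
  have "continuous_on (Gset Y U f) (\<lambda>x. \<phi> (fst x) - c)"
    by (intro continuous_on_diff c2 continuous_on_const)
  then show "continuous_on (Gset Y U f) (\<lambda>(y, u). \<phi> y - c)"
    by (simp add: case_prod_beta')
qed

definition wX :: "nat \<Rightarrow> nat \<Rightarrow> real" where
  "wX T s = (if s < T then (real T - 1 - real s) / real T else 0)"

lemma wX_nonneg: "0 \<le> wX T s" by (simp add: wX_def)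
lemma wX_summable: "summable (wX T)" by (rule summable_finite[of "{..<T}"]) (auto simp: wX_def)

lemma gamma_calc:
  fixes \<phi> :: "'a::metric_space \<Rightarrow> real" and f :: "'a \<Rightarrow> 'b::metric_space \<Rightarrow> 'a"
  assumes fc: "continuous_on (UNIV \<times> U0) (\<lambda>(y, u). f y u)"
    and Ks: "Gset Y U f \<subseteq> UNIV \<times> U0" and Kc: "compact (Gset Y U f)"
    and phic: "continuous_on Y \<phi>" and B: "\<forall>y\<in>Y. \<bar>\<phi> y\<bar> \<le> B"
    and adm: "admissible_fin Y U f T y0 y u" and Tpos: "T > 0"
    and inK: "\<forall>t<T. (y t, u t) \<in> Gset Y U f"
    and gi: "\<forall>g B. g \<in> borel_measurable (restrict_space borel (Gset Y U f)) \<longrightarrow> (\<forall>z\<in>Gset Y U f. \<bar>g z\<bar> \<le> B) \<longrightarrow>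
       integral\<^sup>L \<gamma> g = (\<Sum>t<T. g (y t, u t)) / real T"
  shows "\<bar>integral\<^sup>L \<gamma> (\<lambda>(y, u). \<phi> (f y u) - \<phi> y)\<bar> \<le> 2 * B / real T"
    and "integral\<^sup>L (dmeas (restrict_space borel (Gset Y U f)) (wX T) (\<lambda>s. (y (min s (T - 1)), u (min s (T - 1)))))
           (\<lambda>(y, u). \<phi> (f y u) - \<phi> y) = integral\<^sup>L \<gamma> (\<lambda>(y, u). \<phi> y - \<phi> y0)"
proof -
  let ?K = "Gset Y U f"
  let ?g = "\<lambda>(y, u). \<phi> (f y u) - \<phi> y"
  let ?h = "\<lambda>(y, u). \<phi> y - \<phi> y0"
  have gc: "continuous_on ?K ?g" and hc: "continuous_on ?K ?h" using cont_gh[OF fc Ks phic] by auto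
  obtain Bg where Bg: "\<forall>z\<in>?K. \<bar>?g z\<bar> \<le> Bg" using compact_bound[OF Kc gc] by blast
  obtain Bh where Bh: "\<forall>z\<in>?K. \<bar>?h z\<bar> \<le> Bh" using compact_bound[OF Kc hc] by blast
  have gm: "?g \<in> borel_measurable (restrict_space borel ?K)" by (rule borel_measurable_continuous_on_restrict[OF gc])
  have hm: "?h \<in> borel_measurable (restrict_space borel ?K)" by (rule borel_measurable_continuous_on_restrict[OF hc])
  have yY: "y t \<in> Y" if "t \<le> T" for t
  proof (cases t)
    case 0 then show ?thesis using adm Tpos by (auto simp: admissible_fin_def)
  next
    case (Suc s)
    then have "s < T" using that by simp
    then have "u s \<in> Aset Y U f (y s)" "y (Suc s) = f (y s) (u s)" using adm by (auto simp: admissible_fin_def)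
    then show ?thesis using Suc by (simp add: Aset_def)
  qed
  have step: "t < T \<Longrightarrow> y (Suc t) = f (y t) (u t)" for t using adm by (simp add: admissible_fin_def)
  have y00: "y 0 = y0" using adm by (simp add: admissible_fin_def)
  define a where "a t = \<phi> (y t)" for t
  have gsum: "(\<Sum>t<T. ?g (y t, u t)) = (\<Sum>t<T. a (Suc t) - a t)"
    by (intro sum.cong) (auto simp: a_def step)
  have ig: "integral\<^sup>L \<gamma> ?g = (a T - a 0) / real T"
    using gi[rule_format, OF gm Bg[rule_format]] gsum by (simp add: sum_lessThan_telescope)
  have "\<bar>a T - a 0\<bar> \<le> 2 * B"
  proof -
    have "\<bar>\<phi> (y T)\<bar> \<le> B" "\<bar>\<phi> (y 0)\<bar> \<le> B" using B yY[of T] yY[of 0] by auto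
    then show ?thesis unfolding a_def using abs_triangle_ineq4[of "\<phi> (y T)" "\<phi> (y 0)"] by linarith
  qed
  moreover have "\<bar>(a T - a 0) / real T\<bar> = \<bar>a T - a 0\<bar> / real T" unfolding abs_divide by simp
  ultimately show "\<bar>integral\<^sup>L \<gamma> ?g\<bar> \<le> 2 * B / real T" unfolding ig using Tpos
    by (simp add: divide_right_mono)
  define p where "p s = (y (min s (T - 1)), u (min s (T - 1)))" for s
  have pK: "p s \<in> space (restrict_space borel ?K)" for s using inK Tpos by (simp add: p_def space_restrict_space)
  have peq: "s < T \<Longrightarrow> p s = (y s, u s)" for s by (simp add: p_def)
  have "integral\<^sup>L (dmeas (restrict_space borel ?K) (wX T) p) ?g = (\<Sum>n. wX T n * ?g (p n))"
    by (rule dmeas_integral[OF pK wX_nonneg wX_summable gm, where B=Bg]) (use Bg in \<open>auto simp: space_restrict_space\<close>)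
  also have "\<dots> = (\<Sum>n<T. wX T n * ?g (p n))" by (rule suminf_cut) (simp add: wX_def)
  also have "\<dots> = (\<Sum>s<T. (real T - 1 - real s) * (a (Suc s) - a s)) / real T"
    unfolding sum_divide_distrib by (intro sum.cong) (auto simp: wX_def peq a_def step)
  also have "\<dots> = (\<Sum>t<T. (a t - a 0)) / real T" by (simp add: telescope_weighted)
  also have "\<dots> = integral\<^sup>L \<gamma> ?h"
    using gi[rule_format, OF hm Bh[rule_format]] by (simp add: a_def y00 sum_divide_distrib)
  finally show "integral\<^sup>L (dmeas (restrict_space borel ?K) (wX T) (\<lambda>s. (y (min s (T - 1)), u (min s (T - 1))))) ?g
      = integral\<^sup>L \<gamma> ?h" by (simp add: p_def[abs_def])
qed

lemma theta_calc:
  fixes \<phi> :: "'a::metric_space \<Rightarrow> real" and f :: "'a \<Rightarrow> 'b::metric_space \<Rightarrow> 'a"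
  assumes fc: "continuous_on (UNIV \<times> U0) (\<lambda>(y, u). f y u)"
    and Ks: "Gset Y U f \<subseteq> UNIV \<times> U0" and Kc: "compact (Gset Y U f)"
    and phic: "continuous_on Y \<phi>" and B: "\<forall>y\<in>Y. \<bar>\<phi> y\<bar> \<le> B"
    and adm: "admissible_inf Y U f y0 y u" and al: "0 < \<alpha>" "\<alpha> < 1"
    and inK: "\<forall>t. (y t, u t) \<in> Gset Y U f"
    and gi: "\<forall>g B. g \<in> borel_measurable (restrict_space borel (Gset Y U f)) \<longrightarrow> (\<forall>z\<in>Gset Y U f. \<bar>g z\<bar> \<le> B) \<longrightarrow>
       integral\<^sup>L \<gamma> g = (1 - \<alpha>) * (\<Sum>t. \<alpha> ^ t * g (y t, u t))"
  shows "\<bar>integral\<^sup>L \<gamma> (\<lambda>(y, u). \<phi> (f y u) - \<phi> y)\<bar> \<le> 2 * B * (1 - \<alpha>) / \<alpha>"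
    and "integral\<^sup>L (dmeas (restrict_space borel (Gset Y U f)) (\<lambda>s. \<alpha> ^ Suc s) (\<lambda>s. (y s, u s)))
           (\<lambda>(y, u). \<phi> (f y u) - \<phi> y) = integral\<^sup>L \<gamma> (\<lambda>(y, u). \<phi> y - \<phi> y0)"
proof -
  let ?K = "Gset Y U f"
  let ?g = "\<lambda>(y, u). \<phi> (f y u) - \<phi> y"
  let ?h = "\<lambda>(y, u). \<phi> y - \<phi> y0"
  have gc: "continuous_on ?K ?g" and hc: "continuous_on ?K ?h" using cont_gh[OF fc Ks phic] by auto
  obtain Bg where Bg: "\<forall>z\<in>?K. \<bar>?g z\<bar> \<le> Bg" using compact_bound[OF Kc gc] by blast
  obtain Bh where Bh: "\<forall>z\<in>?K. \<bar>?h z\<bar> \<le> Bh" using compact_bound[OF Kc hc] by blast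
  have gm: "?g \<in> borel_measurable (restrict_space borel ?K)" by (rule borel_measurable_continuous_on_restrict[OF gc])
  have hm: "?h \<in> borel_measurable (restrict_space borel ?K)" by (rule borel_measurable_continuous_on_restrict[OF hc])
  have yY: "y t \<in> Y" for t using adm by (simp add: admissible_inf_def)
  have step: "y (Suc t) = f (y t) (u t)" for t using adm by (simp add: admissible_inf_def)
  have y00: "y 0 = y0" using adm by (simp add: admissible_inf_def)
  define a where "a t = \<phi> (y t)" for t
  have aB: "\<bar>a t\<bar> \<le> B" for t using B yY by (simp add: a_def)
  have B0: "0 \<le> B" using aB[of 0] by linarith
  have sgeo: "summable (\<lambda>t. \<alpha> ^ t)" using al by (intro summable_geometric) auto
  have geo: "(\<Sum>t. \<alpha> ^ t) = 1 / (1 - \<alpha>)" using al by (subst suminf_geometric) auto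
  have bnd: "summable (\<lambda>t. norm (\<alpha> ^ t * c t))" if "\<And>t. \<bar>c t\<bar> \<le> C" for c :: "nat \<Rightarrow> real" and C
  proof (rule summable_comparison_test'[OF summable_mult[OF sgeo, of C], where N=0])
    fix n
    have "\<bar>\<alpha> ^ n * c n\<bar> = \<alpha> ^ n * \<bar>c n\<bar>" using al by (simp add: abs_mult)
    also have "\<dots> \<le> \<alpha> ^ n * C" by (rule mult_left_mono) (use that al in auto)
    finally show "norm (norm (\<alpha> ^ n * c n)) \<le> C * \<alpha> ^ n" by (simp add: mult.commute)
  qed
  have sS: "summable (\<lambda>t. \<alpha> ^ t * a t)" by (rule summable_norm_cancel[OF bnd[OF aB]])
  have sS1: "summable (\<lambda>t. \<alpha> ^ t * a (Suc t))" by (rule summable_norm_cancel[OF bnd[of "\<lambda>t. a (Suc t)", OF aB]])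
  define S where "S = (\<Sum>t. \<alpha> ^ t * a t)"
  have shift: "(\<Sum>t. \<alpha> ^ Suc t * a (Suc t)) = S - a 0"
    unfolding S_def using suminf_split_head[OF sS] by simp
  have shift2: "(\<Sum>t. \<alpha> ^ t * a (Suc t)) = (S - a 0) / \<alpha>"
  proof -
    have "\<alpha> * (\<Sum>t. \<alpha> ^ t * a (Suc t)) = (\<Sum>t. \<alpha> * (\<alpha> ^ t * a (Suc t)))"
      by (rule suminf_mult[OF sS1, symmetric])
    also have "\<dots> = S - a 0" using shift by (simp add: mult.assoc)
    finally show ?thesis using al by (simp add: field_simps)
  qed
  have Sb: "\<bar>(1 - \<alpha>) * S\<bar> \<le> B"
  proof -
    have "\<bar>S\<bar> \<le> (\<Sum>t. norm (\<alpha> ^ t * a t))" unfolding S_def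
      using summable_norm[OF bnd[OF aB]] by simp
    also have "\<dots> \<le> (\<Sum>t. B * \<alpha> ^ t)"
    proof (rule suminf_le[OF _ bnd[OF aB] summable_mult[OF sgeo]])
      fix t
      have "\<bar>\<alpha> ^ t * a t\<bar> = \<alpha> ^ t * \<bar>a t\<bar>" using al by (simp add: abs_mult)
      also have "\<dots> \<le> \<alpha> ^ t * B" by (rule mult_left_mono) (use aB al in auto)
      finally show "norm (\<alpha> ^ t * a t) \<le> B * \<alpha> ^ t" by (simp add: mult.commute)
    qed
    also have "\<dots> = B / (1 - \<alpha>)" using suminf_mult[OF sgeo, of B] geo by simp
    finally have "\<bar>S\<bar> \<le> B / (1 - \<alpha>)" .
    then have "(1 - \<alpha>) * \<bar>S\<bar> \<le> B" using al by (simp add: field_simps)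
    then show ?thesis using al by (simp add: abs_mult)
  qed
  have gsum: "(\<Sum>t. \<alpha> ^ t * ?g (y t, u t)) = (\<Sum>t. \<alpha> ^ t * a (Suc t) - \<alpha> ^ t * a t)"
    by (simp add: a_def step right_diff_distrib)
  have ig: "integral\<^sup>L \<gamma> ?g = (1 - \<alpha>) * ((S - a 0) / \<alpha> - S)"
    using gi[rule_format, OF gm Bg[rule_format]] gsum suminf_diff[OF sS1 sS] shift2 S_def by simp
  also have "\<dots> = ((1 - \<alpha>) / \<alpha>) * ((1 - \<alpha>) * S - a 0)" using al by (simp add: field_simps)
  finally have ig2: "integral\<^sup>L \<gamma> ?g = ((1 - \<alpha>) / \<alpha>) * ((1 - \<alpha>) * S - a 0)" .
  have "\<bar>(1 - \<alpha>) * S - a 0\<bar> \<le> 2 * B" using Sb aB[of 0] by linarith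
  then have "((1 - \<alpha>) / \<alpha>) * \<bar>(1 - \<alpha>) * S - a 0\<bar> \<le> ((1 - \<alpha>) / \<alpha>) * (2 * B)"
    using al by (intro mult_left_mono) auto
  moreover have "\<bar>integral\<^sup>L \<gamma> ?g\<bar> = ((1 - \<alpha>) / \<alpha>) * \<bar>(1 - \<alpha>) * S - a 0\<bar>"
    unfolding ig2 abs_mult using al by simp
  moreover have "((1 - \<alpha>) / \<alpha>) * (2 * B) = 2 * B * (1 - \<alpha>) / \<alpha>" by simp
  ultimately show "\<bar>integral\<^sup>L \<gamma> ?g\<bar> \<le> 2 * B * (1 - \<alpha>) / \<alpha>" by linarith
  have pK: "(y s, u s) \<in> space (restrict_space borel ?K)" for s using inK by (simp add: space_restrict_space)
  have wn: "0 \<le> \<alpha> ^ Suc s" for s using al by simp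
  have ws: "summable (\<lambda>s. \<alpha> ^ Suc s)" using summable_mult[OF sgeo, of \<alpha>] by simp
  have "integral\<^sup>L (dmeas (restrict_space borel ?K) (\<lambda>s. \<alpha> ^ Suc s) (\<lambda>s. (y s, u s))) ?g
      = (\<Sum>n. \<alpha> ^ Suc n * ?g (y n, u n))"
    by (rule dmeas_integral[OF pK wn ws gm, where B=Bg]) (use Bg in \<open>auto simp: space_restrict_space\<close>)
  also have "\<dots> = (\<Sum>n. \<alpha> ^ Suc n * a (Suc n) - \<alpha> * (\<alpha> ^ n * a n))"
    by (simp add: a_def step right_diff_distrib mult.assoc)
  also have "\<dots> = (\<Sum>n. \<alpha> ^ Suc n * a (Suc n)) - (\<Sum>n. \<alpha> * (\<alpha> ^ n * a n))"
  proof -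
    have s1: "summable (\<lambda>n. \<alpha> ^ Suc n * a (Suc n))" using summable_mult[OF sS1, of \<alpha>] by (simp add: mult.assoc)
    have s2: "summable (\<lambda>n. \<alpha> * (\<alpha> ^ n * a n))" by (rule summable_mult[OF sS])
    show ?thesis by (rule suminf_diff[OF s1 s2, symmetric])
  qed
  also have "\<dots> = (S - a 0) - \<alpha> * S" using shift suminf_mult[OF sS, of \<alpha>] S_def by simp
  finally have ix: "integral\<^sup>L (dmeas (restrict_space borel ?K) (\<lambda>s. \<alpha> ^ Suc s) (\<lambda>s. (y s, u s))) ?g = (S - a 0) - \<alpha> * S" .
  have hsum: "(\<Sum>t. \<alpha> ^ t * ?h (y t, u t)) = (\<Sum>t. \<alpha> ^ t * a t - a 0 * \<alpha> ^ t)"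
    by (simp add: a_def y00 right_diff_distrib mult.commute)
  have "integral\<^sup>L \<gamma> ?h = (1 - \<alpha>) * (S - a 0 * (1 / (1 - \<alpha>)))"
    using gi[rule_format, OF hm Bh[rule_format]] hsum suminf_diff[OF sS summable_mult[OF sgeo, of "a 0"]]
      suminf_mult[OF sgeo, of "a 0"] geo S_def by simp
  also have "\<dots> = (S - a 0) - \<alpha> * S" using al by (simp add: field_simps)
  finally show "integral\<^sup>L (dmeas (restrict_space borel ?K) (\<lambda>s. \<alpha> ^ Suc s) (\<lambda>s. (y s, u s))) ?g
      = integral\<^sup>L \<gamma> ?h" using ix by simp
qed

lemma part_gamma:
  fixes Y :: "'a::metric_space set" and f :: "'a \<Rightarrow> 'b::metric_space \<Rightarrow> 'a"
  assumes fc: "continuous_on (UNIV \<times> U0) (\<lambda>(y, u). f y u)"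
    and Ks: "Gset Y U f \<subseteq> UNIV \<times> U0" and Kc: "compact (Gset Y U f)" and Yc: "compact Y"
  shows "limsup_Gamma Y U f y0 \<subseteq> W2set Y U f y0"
proof
  let ?K = "Gset Y U f"
  let ?M = "restrict_space borel ?K"
  fix \<gamma> assume "\<gamma> \<in> limsup_Gamma Y U f y0"
  then obtain T gs where gp: "\<gamma> \<in> prob_on ?K" and Tl: "filterlim T at_top sequentially"
    and gsG: "\<forall>i. gs i \<in> Gamma Y U f (T i) y0" and wc: "weak_conv ?K gs \<gamma>"
    unfolding limsup_Gamma_def by blast
  define Q where "Q i y u \<longleftrightarrow> admissible_fin Y U f (T i) y0 y u \<and> T i > 0 \<and> (\<forall>t<T i. (y t, u t) \<in> ?K) \<and>
    (\<forall>g B. g \<in> borel_measurable ?M \<longrightarrow> (\<forall>z\<in>?K. \<bar>g z\<bar> \<le> B) \<longrightarrow>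
       integral\<^sup>L (gs i) g = (\<Sum>t<T i. g (y t, u t)) / real (T i))" for i y u
  have "\<forall>i. \<exists>y. \<exists>u. Q i y u" unfolding Q_def using Gamma_repr gsG by blast
  then obtain ys where "\<forall>i. \<exists>u. Q i (ys i) u" by (metis choice)
  then obtain us where Qi: "\<forall>i. Q i (ys i) (us i)" by (metis choice)
  define \<xi> where "\<xi> i = dmeas ?M (wX (T i)) (\<lambda>s. (ys i (min s (T i - 1)), us i (min s (T i - 1))))" for i
  have xifin: "\<xi> i \<in> fin_on ?K" for i
  proof -
    have h: "T i > 0" "\<forall>t<T i. (ys i t, us i t) \<in> ?K" using Qi unfolding Q_def by auto
    have "(ys i (min s (T i - 1)), us i (min s (T i - 1))) \<in> space ?M" for s
      using h(2)[rule_format, of "min s (T i - 1)"] h(1) by (simp add: space_restrict_space)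
    then have "finite_measure (\<xi> i)" unfolding \<xi>_def by (intro dmeas_finite wX_nonneg wX_summable)
    then show ?thesis by (simp add: fin_on_def \<xi>_def)
  qed
  have main: "integral\<^sup>L \<gamma> (\<lambda>(y, u). \<phi> (f y u) - \<phi> y) = 0 \<and>
     (\<lambda>i. integral\<^sup>L (\<xi> i) (\<lambda>(y, u). \<phi> (f y u) - \<phi> y)) \<longlonglongrightarrow> integral\<^sup>L \<gamma> (\<lambda>(y, u). \<phi> y - \<phi> y0)"
    if phic: "continuous_on Y \<phi>" for \<phi> :: "'a \<Rightarrow> real"
  proof -
    let ?g = "\<lambda>(y, u). \<phi> (f y u) - \<phi> y"
    let ?h = "\<lambda>(y, u). \<phi> y - \<phi> y0"
    obtain B where B: "B \<ge> 0" "\<forall>y\<in>Y. \<bar>\<phi> y\<bar> \<le> B" using compact_bound[OF Yc phic] by blast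
    have gc: "continuous_on ?K ?g" and hc: "continuous_on ?K ?h" using cont_gh[OF fc Ks phic] by auto
    have cg: "(\<lambda>i. integral\<^sup>L (gs i) ?g) \<longlonglongrightarrow> integral\<^sup>L \<gamma> ?g" using wc gc unfolding weak_conv_def by blast
    have ch: "(\<lambda>i. integral\<^sup>L (gs i) ?h) \<longlonglongrightarrow> integral\<^sup>L \<gamma> ?h" using wc hc unfolding weak_conv_def by blast
    have calc: "\<bar>integral\<^sup>L (gs i) ?g\<bar> \<le> 2 * B / real (T i) \<and> integral\<^sup>L (\<xi> i) ?g = integral\<^sup>L (gs i) ?h" for i
    proof -
      have q: "admissible_fin Y U f (T i) y0 (ys i) (us i)" "T i > 0" "\<forall>t<T i. (ys i t, us i t) \<in> ?K"
        "\<forall>g B. g \<in> borel_measurable ?M \<longrightarrow> (\<forall>z\<in>?K. \<bar>g z\<bar> \<le> B) \<longrightarrow>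
          integral\<^sup>L (gs i) g = (\<Sum>t<T i. g (ys i t, us i t)) / real (T i)"
        using Qi unfolding Q_def by auto
      show ?thesis using gamma_calc[OF fc Ks Kc phic B(2) q] unfolding \<xi>_def by simp
    qed
    have "(\<lambda>i. 2 * B / real (T i)) \<longlonglongrightarrow> 0"
    proof (rule tendsto_divide_0[OF tendsto_const])
      show "filterlim (\<lambda>i. real (T i)) at_infinity sequentially"
        by (rule filterlim_at_top_imp_at_infinity[OF filterlim_compose[OF filterlim_real_sequentially Tl]])
    qed
    then have "(\<lambda>i. integral\<^sup>L (gs i) ?g) \<longlonglongrightarrow> 0"
      by (rule Lim_null_comparison[rotated]) (use calc in simp)
    then have "integral\<^sup>L \<gamma> ?g = 0" using cg LIMSEQ_unique by blast
    moreover have "(\<lambda>i. integral\<^sup>L (\<xi> i) ?g) \<longlonglongrightarrow> integral\<^sup>L \<gamma> ?h" using ch calc by simp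
    ultimately show ?thesis by blast
  qed
  show "\<gamma> \<in> W2set Y U f y0" unfolding W2set_def Wset_def
    using gp main xifin by blast
qed

lemma part_theta:
  fixes Y :: "'a::metric_space set" and f :: "'a \<Rightarrow> 'b::metric_space \<Rightarrow> 'a"
  assumes fc: "continuous_on (UNIV \<times> U0) (\<lambda>(y, u). f y u)"
    and Ks: "Gset Y U f \<subseteq> UNIV \<times> U0" and Kc: "compact (Gset Y U f)" and Yc: "compact Y"
  shows "limsup_Theta Y U f y0 \<subseteq> W2set Y U f y0"
proof
  let ?K = "Gset Y U f"
  let ?M = "restrict_space borel ?K"
  fix \<gamma> assume "\<gamma> \<in> limsup_Theta Y U f y0"
  then obtain \<alpha> gs where gp: "\<gamma> \<in> prob_on ?K" and al: "\<forall>i. 0 < \<alpha> i \<and> \<alpha> i < 1" and al1: "\<alpha> \<longlonglongrightarrow> 1"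
    and gsG: "\<forall>i. gs i \<in> Theta Y U f (\<alpha> i) y0" and wc: "weak_conv ?K gs \<gamma>"
    unfolding limsup_Theta_def by blast
  define Q where "Q i y u \<longleftrightarrow> admissible_inf Y U f y0 y u \<and> (\<forall>t. (y t, u t) \<in> ?K) \<and>
    (\<forall>g B. g \<in> borel_measurable ?M \<longrightarrow> (\<forall>z\<in>?K. \<bar>g z\<bar> \<le> B) \<longrightarrow>
       integral\<^sup>L (gs i) g = (1 - \<alpha> i) * (\<Sum>t. \<alpha> i ^ t * g (y t, u t)))" for i y u
  have "\<forall>i. \<exists>y. \<exists>u. Q i y u" unfolding Q_def using Theta_repr gsG al by blast
  then obtain ys where "\<forall>i. \<exists>u. Q i (ys i) u" by (metis choice)
  then obtain us where Qi: "\<forall>i. Q i (ys i) (us i)" by (metis choice)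
  define \<xi> where "\<xi> i = dmeas ?M (\<lambda>s. \<alpha> i ^ Suc s) (\<lambda>s. (ys i s, us i s))" for i
  have xifin: "\<xi> i \<in> fin_on ?K" for i
  proof -
    have "(ys i s, us i s) \<in> space ?M" for s
      using Qi unfolding Q_def by (simp add: space_restrict_space)
    moreover have "0 \<le> \<alpha> i ^ Suc s" for s using al by (simp add: less_imp_le)
    moreover have "summable (\<lambda>s. \<alpha> i ^ Suc s)"
    proof -
      have "0 < \<alpha> i" "\<alpha> i < 1" using al by auto
      then have "norm (\<alpha> i) < 1" by simp
      then show ?thesis using summable_mult[OF summable_geometric, of "\<alpha> i" "\<alpha> i"] by simp
    qed
    ultimately have "finite_measure (\<xi> i)" unfolding \<xi>_def by (intro dmeas_finite) auto
    then show ?thesis by (simp add: fin_on_def \<xi>_def)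
  qed
  have main: "integral\<^sup>L \<gamma> (\<lambda>(y, u). \<phi> (f y u) - \<phi> y) = 0 \<and>
     (\<lambda>i. integral\<^sup>L (\<xi> i) (\<lambda>(y, u). \<phi> (f y u) - \<phi> y)) \<longlonglongrightarrow> integral\<^sup>L \<gamma> (\<lambda>(y, u). \<phi> y - \<phi> y0)"
    if phic: "continuous_on Y \<phi>" for \<phi> :: "'a \<Rightarrow> real"
  proof -
    let ?g = "\<lambda>(y, u). \<phi> (f y u) - \<phi> y"
    let ?h = "\<lambda>(y, u). \<phi> y - \<phi> y0"
    obtain B where B: "B \<ge> 0" "\<forall>y\<in>Y. \<bar>\<phi> y\<bar> \<le> B" using compact_bound[OF Yc phic] by blast
    have gc: "continuous_on ?K ?g" and hc: "continuous_on ?K ?h" using cont_gh[OF fc Ks phic] by auto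
    have cg: "(\<lambda>i. integral\<^sup>L (gs i) ?g) \<longlonglongrightarrow> integral\<^sup>L \<gamma> ?g" using wc gc unfolding weak_conv_def by blast
    have ch: "(\<lambda>i. integral\<^sup>L (gs i) ?h) \<longlonglongrightarrow> integral\<^sup>L \<gamma> ?h" using wc hc unfolding weak_conv_def by blast
    have calc: "\<bar>integral\<^sup>L (gs i) ?g\<bar> \<le> 2 * B * (1 - \<alpha> i) / \<alpha> i \<and> integral\<^sup>L (\<xi> i) ?g = integral\<^sup>L (gs i) ?h" for i
    proof -
      have q: "admissible_inf Y U f y0 (ys i) (us i)" "\<forall>t. (ys i t, us i t) \<in> ?K"
        "\<forall>g B. g \<in> borel_measurable ?M \<longrightarrow> (\<forall>z\<in>?K. \<bar>g z\<bar> \<le> B) \<longrightarrow>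
          integral\<^sup>L (gs i) g = (1 - \<alpha> i) * (\<Sum>t. \<alpha> i ^ t * g (ys i t, us i t))"
        using Qi unfolding Q_def by auto
      have a: "0 < \<alpha> i" "\<alpha> i < 1" using al by auto
      show ?thesis using theta_calc[OF fc Ks Kc phic B(2) q(1) a q(2) q(3)] unfolding \<xi>_def by simp
    qed
    have "(\<lambda>i. 2 * B * (1 - \<alpha> i) / \<alpha> i) \<longlonglongrightarrow> 2 * B * (1 - 1) / 1"
      by (intro tendsto_intros al1) simp
    then have "(\<lambda>i. 2 * B * (1 - \<alpha> i) / \<alpha> i) \<longlonglongrightarrow> 0" by simp
    then have "(\<lambda>i. integral\<^sup>L (gs i) ?g) \<longlonglongrightarrow> 0"
      by (rule Lim_null_comparison[rotated]) (use calc in simp)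
    then have "integral\<^sup>L \<gamma> ?g = 0" using cg LIMSEQ_unique by blast
    moreover have "(\<lambda>i. integral\<^sup>L (\<xi> i) ?g) \<longlonglongrightarrow> integral\<^sup>L \<gamma> ?h" using ch calc by simp
    ultimately show ?thesis by blast
  qed
  show "\<gamma> \<in> W2set Y U f y0" unfolding W2set_def Wset_def
    using gp main xifin by blast
qed

lemma occ_in_Gamma:
  fixes Y :: "'a::topological_space set" and f :: "'a \<Rightarrow> 'b::topological_space \<Rightarrow> 'a"
  assumes adm: "admissible_inf Y U f y0 y u" and Tpos: "T > 0"
  shows "occ (Gset Y U f) T (\<lambda>t. (y t, u t)) \<in> Gamma Y U f T y0"
proof -
  let ?K = "Gset Y U f"
  let ?M = "restrict_space borel ?K"
  have inK: "(y t, u t) \<in> space ?M" for t using adm by (auto simp: admissible_inf_def Gset_def space_restrict_space)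
  have pr: "occ ?K T (\<lambda>t. (y t, u t)) \<in> prob_on ?K" unfolding prob_on_def occ_def
    using dmeas_prob[OF inK wT_nonneg wT_summable wT_sum1[OF Tpos]] by simp
  have af: "admissible_fin Y U f T y0 y u" using adm by (simp add: admissible_inf_def admissible_fin_def)
  have em: "emeasure (occ ?K T (\<lambda>t. (y t, u t))) Q = ennreal ((\<Sum>t<T. indicator Q (y t, u t)) / real T)"
    if "Q \<in> sets (occ ?K T (\<lambda>t. (y t, u t)))" for Q
  proof -
    have Q: "Q \<in> sets ?M" using that by (simp add: occ_def)
    show ?thesis unfolding occ_def
      by (subst emeasure_dmeas_real[OF inK Q wT_nonneg wT_summable]) (simp add: wT_series)
  qed
  show ?thesis unfolding Gamma_def using pr af em by blast
qed

lemma part_nonempty: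
  fixes Y :: "'a::metric_space set" and f :: "'a \<Rightarrow> 'b::metric_space \<Rightarrow> 'a"
  assumes Kc: "compact (Gset Y U f)" and y0: "y0 \<in> Y" and ne: "\<forall>y\<in>Y. Aset Y U f y \<noteq> {}"
  shows "limsup_Gamma Y U f y0 \<noteq> {}"
proof -
  let ?K = "Gset Y U f"
  define sel where "sel z = (SOME v. v \<in> Aset Y U f z)" for z
  have sel: "z \<in> Y \<Longrightarrow> sel z \<in> Aset Y U f z" for z unfolding sel_def using ne some_in_eq by blast
  define F where "F z = f z (sel z)" for z
  define ys where "ys t = (F ^^ t) y0" for t
  define us where "us t = sel (ys t)" for t
  have ysY: "ys t \<in> Y" for t
  proof (induction t)
    case 0 then show ?case using y0 by (simp add: ys_def)
  next
    case (Suc t)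
    have "sel (ys t) \<in> Aset Y U f (ys t)" using sel[OF Suc] .
    then show ?case by (simp add: ys_def F_def Aset_def)
  qed
  have adm: "admissible_inf Y U f y0 ys us"
    unfolding admissible_inf_def using ysY sel by (simp add: ys_def us_def F_def)
  have xK: "(ys t, us t) \<in> ?K" for t using ysY sel by (simp add: Gset_def us_def)
  obtain r \<gamma> where r: "strict_mono r" and gp: "\<gamma> \<in> prob_on ?K"
    and wc: "weak_conv ?K (\<lambda>k. occ ?K (Suc (r k)) (\<lambda>t. (ys t, us t))) \<gamma>"
    using seq_compact_occ[OF Kc, of "\<lambda>t. (ys t, us t)"] xK by blast
  have tl: "filterlim (\<lambda>k. Suc (r k)) at_top sequentially"
    unfolding filterlim_at_top eventually_sequentially
  proof (intro allI)
    fix Z :: nat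
    have "\<forall>k\<ge>Z. Z \<le> Suc (r k)"
    proof (intro allI impI)
      fix k assume "Z \<le> k"
      then show "Z \<le> Suc (r k)" using seq_suble[OF r, of k] by simp
    qed
    then show "\<exists>N. \<forall>k\<ge>N. Z \<le> Suc (r k)" by blast
  qed
  have gam: "\<forall>k. occ ?K (Suc (r k)) (\<lambda>t. (ys t, us t)) \<in> Gamma Y U f (Suc (r k)) y0"
    using occ_in_Gamma[OF adm] by simp
  have "\<exists>T gs. filterlim T at_top sequentially \<and> (\<forall>i. gs i \<in> Gamma Y U f (T i) y0) \<and> weak_conv ?K gs \<gamma>"
    by (rule exI[of _ "\<lambda>k. Suc (r k)"], rule exI[of _ "\<lambda>k. occ ?K (Suc (r k)) (\<lambda>t. (ys t, us t))"])
      (use tl wc gam in simp)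
  then have "\<gamma> \<in> limsup_Gamma Y U f y0" unfolding limsup_Gamma_def using gp by blast
  then show ?thesis by blast
qed

theorem lemma2p1:
  fixes Y :: "'a::euclidean_space set" and U0 :: "'b::metric_space set"
    and U :: "'a \<Rightarrow> 'b set" and f :: "'a \<Rightarrow> 'b \<Rightarrow> 'a" and y0 :: 'a
  assumes "compact Y" and "Y \<noteq> {}"
    and "compact U0"
    and "\<forall>y\<in>Y. U y \<subseteq> U0 \<and> compact (U y)"
    and "usc_on Y U"
    and "continuous_on (UNIV \<times> U0) (\<lambda>(y, u). f y u)"
    and "\<forall>y\<in>Y. Aset Y U f y \<noteq> {}"
    and "y0 \<in> Y"
  shows "limsup_Gamma Y U f y0 \<subseteq> W2set Y U f y0 \<and>
         limsup_Theta Y U f y0 \<subseteq> W2set Y U f y0 \<and>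
         W2set Y U f y0 \<noteq> {}"
proof -
  have Kc: "compact (Gset Y U f)" by (rule G_compact[OF assms(1) assms(3) assms(4) assms(5) assms(6)])
  have Ks: "Gset Y U f \<subseteq> UNIV \<times> U0" by (rule G_sub[OF assms(4)])
  have p1: "limsup_Gamma Y U f y0 \<subseteq> W2set Y U f y0" by (rule part_gamma[OF assms(6) Ks Kc assms(1)])
  have p2: "limsup_Theta Y U f y0 \<subseteq> W2set Y U f y0" by (rule part_theta[OF assms(6) Ks Kc assms(1)])
  have "limsup_Gamma Y U f y0 \<noteq> {}" by (rule part_nonempty[OF Kc assms(8) assms(7)])
  then have "W2set Y U f y0 \<noteq> {}" using p1 by blast
  then show ?thesis using p1 p2 by blast
qed

end
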